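(* Let $(U_t)_{t\ge0}$ and $(V_t)_{t\ge0}$ be independent irreducible continuous-time Markov chains with finite state spaces $\Omega_U$ and $\Omega_V$, and let $\pi_V$ be the stationary distribution of $V$. Let $\mu$ be a probability measure on $\Omega_U\times\Omega_V$ (the law of $(U_0,V_0)$ under $\mathbb P_\mu$), and let $\tau$ be a stopping time for the process $(U_t,V_t)_{t\ge0}$ such that (1) $\mathbb P_\mu(\tau>0)=1$; (2) $\mathbb E_\mu[\tau]<\infty$; (3) $V_0$ and $V_\tau$ have the same law under $\mathbb P_\mu$. Then for all $v\in\Omega_V$, \[\mathbb E_\mu\Big[\int_0^\tau\mathbf 1(V_t=v)\,dt\Big]=\mathbb E_\mu[\tau]\,\pi_V(v).\] *)

theory Defs
  imports "HOL-Analysis.Analysis" "HOL-Probability.Probability"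
begin

fun matpow :: "('s::finite \<Rightarrow> 's \<Rightarrow> real) \<Rightarrow> nat \<Rightarrow> 's \<Rightarrow> 's \<Rightarrow> real" where
  "matpow Q 0 x y = (if x = y then 1 else 0)"
| "matpow Q (Suc n) x y = (\<Sum>z\<in>UNIV. matpow Q n x z * Q z y)"

definition trans_fun :: "('s::finite \<Rightarrow> 's \<Rightarrow> real) \<Rightarrow> real \<Rightarrow> 's \<Rightarrow> 's \<Rightarrow> real" where
  "trans_fun Q t x y = (\<Sum>n. t ^ n / fact n * matpow Q n x y)"

definition generator :: "('s::finite \<Rightarrow> 's \<Rightarrow> real) \<Rightarrow> bool" where
  "generator Q \<longleftrightarrow> (\<forall>x y. x \<noteq> y \<longrightarrow> 0 \<le> Q x y) \<and> (\<forall>x. (\<Sum>y\<in>UNIV. Q x y) = 0)"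

definition irreducible_gen :: "('s::finite \<Rightarrow> 's \<Rightarrow> real) \<Rightarrow> bool" where
  "irreducible_gen Q \<longleftrightarrow> generator Q \<and> (\<forall>x y. (x, y) \<in> {(a, b). a \<noteq> b \<and> 0 < Q a b}\<^sup>*)"

definition stationary_dist :: "('s::finite \<Rightarrow> 's \<Rightarrow> real) \<Rightarrow> ('s \<Rightarrow> real) \<Rightarrow> bool" where
  "stationary_dist Q \<pi> \<longleftrightarrow> (\<forall>x. 0 \<le> \<pi> x) \<and> (\<Sum>x\<in>UNIV. \<pi> x) = 1 \<and>
     (\<forall>y. (\<Sum>x\<in>UNIV. \<pi> x * Q x y) = 0)"

text \<open>Generator of the pair (U,V) of two independently evolving chains.\<close>
definition prod_gen :: "('u::finite \<Rightarrow> 'u \<Rightarrow> real) \<Rightarrow> ('v::finite \<Rightarrow> 'v \<Rightarrow> real)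
    \<Rightarrow> 'u \<times> 'v \<Rightarrow> 'u \<times> 'v \<Rightarrow> real" where
  "prod_gen QU QV p q =
     (if snd p = snd q then QU (fst p) (fst q) else 0) + (if fst p = fst q then QV (snd p) (snd q) else 0)"

definition ctmc :: "'a measure \<Rightarrow> ('s::finite \<Rightarrow> 's \<Rightarrow> real) \<Rightarrow> (real \<Rightarrow> 'a \<Rightarrow> 's) \<Rightarrow> bool" where
  "ctmc M Q X \<longleftrightarrow>
     (\<forall>t\<ge>0. X t \<in> measurable M (count_space UNIV)) \<and>
     (\<forall>\<omega>\<in>space M. \<forall>t\<ge>0. \<exists>e>0. \<forall>s. t \<le> s \<and> s < t + e \<longrightarrow> X s \<omega> = X t \<omega>) \<and>
     (\<forall>(n::nat) (ts::nat \<Rightarrow> real) (xs::nat \<Rightarrow> 's).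
        0 \<le> ts 0 \<longrightarrow> (\<forall>i<n. ts i \<le> ts (Suc i)) \<longrightarrow>
        measure M {\<omega>\<in>space M. \<forall>i\<le>n. X (ts i) \<omega> = xs i} =
        measure M {\<omega>\<in>space M. X (ts 0) \<omega> = xs 0} *
          (\<Prod>i<n. trans_fun Q (ts (Suc i) - ts i) (xs i) (xs (Suc i))))"

definition nat_filtration :: "'a measure \<Rightarrow> (real \<Rightarrow> 'a \<Rightarrow> 's) \<Rightarrow> real \<Rightarrow> 'a measure" where
  "nat_filtration M X t =
     sigma (space M) {X s -` {z} \<inter> space M | s z. 0 \<le> s \<and> s \<le> t}"

end

theory Submission imports Defs begin

definition Kb :: "('s::finite \<Rightarrow> 's \<Rightarrow> real) \<Rightarrow> real" where
  "Kb Q = (\<Sum>a\<in>UNIV. \<Sum>b\<in>UNIV. \<bar>Q a b\<bar>)"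

lemma Kb_nonneg: "0 \<le> Kb Q" by (simp add: Kb_def sum_nonneg)

lemma col_le_Kb: "(\<Sum>a\<in>UNIV. \<bar>Q a y\<bar>) \<le> Kb Q"
  unfolding Kb_def by (intro sum_mono member_le_sum) auto

lemma row_le_Kb: "(\<Sum>b\<in>UNIV. \<bar>Q x b\<bar>) \<le> Kb Q"
  unfolding Kb_def by (rule member_le_sum[where f="\<lambda>a. \<Sum>b\<in>UNIV. \<bar>Q a b\<bar>"]) (auto intro: sum_nonneg)

lemma matpow_bound: "\<bar>matpow Q n x y\<bar> \<le> Kb Q ^ n"
proof (induction n arbitrary: x y)
  case 0 then show ?case by simp
next
  case (Suc n)
  have "\<bar>matpow Q (Suc n) x y\<bar> \<le> (\<Sum>z\<in>UNIV. \<bar>matpow Q n x z\<bar> * \<bar>Q z y\<bar>)"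
    by (simp add: abs_mult[symmetric] sum_abs)
  also have "\<dots> \<le> (\<Sum>z\<in>UNIV. Kb Q ^ n * \<bar>Q z y\<bar>)"
    by (intro sum_mono mult_right_mono Suc.IH) auto
  also have "\<dots> = Kb Q ^ n * (\<Sum>z\<in>UNIV. \<bar>Q z y\<bar>)" by (simp add: sum_distrib_left)
  also have "\<dots> \<le> Kb Q ^ n * Kb Q" by (intro mult_left_mono col_le_Kb) (simp add: Kb_nonneg)
  finally show ?case by (simp add: mult.commute)
qed

lemma matpow_1[simp]: "matpow Q (Suc 0) x y = Q x y"
proof -
  have "\<And>z. (if x = z then 1 else 0) * Q z y = (if x = z then Q x y else 0)" by auto
  then show ?thesis by (simp add: sum.delta)
qed

lemma summable_expK: "summable (\<lambda>n. c ^ n / fact n :: real)"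
  using summable_exp[of c] by (simp add: divide_inverse mult.commute)

lemma exp_suminf: "exp c = (\<Sum>n. c ^ n / fact n :: real)"
  using exp_converges[of c, THEN sums_unique] by (simp add: divide_inverse mult.commute)

lemma trans_term_bound: "\<bar>t ^ n / fact n * matpow Q n x y\<bar> \<le> (\<bar>t\<bar> * Kb Q) ^ n / fact n"
proof -
  have "\<bar>t ^ n / fact n * matpow Q n x y\<bar> = \<bar>t\<bar> ^ n / fact n * \<bar>matpow Q n x y\<bar>"
    by (simp add: abs_mult power_abs)
  also have "\<dots> \<le> \<bar>t\<bar> ^ n / fact n * Kb Q ^ n"
    by (intro mult_left_mono matpow_bound) auto
  finally show ?thesis by (simp add: power_mult_distrib)
qed

lemma trans_summable: "summable (\<lambda>n. t ^ n / fact n * matpow Q n x y)"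
  apply (rule summable_comparison_test[OF _ summable_expK[of "\<bar>t\<bar> * Kb Q"]])
  apply (intro exI[of _ 0] allI impI)
  apply (simp only: real_norm_def trans_term_bound)
  done

lemma trans_approx:
  assumes h: "0 \<le> h" "h \<le> 1"
  shows "\<bar>trans_fun Q h x y - ((if x = y then 1 else 0) + h * Q x y)\<bar> \<le> h^2 * exp (Kb Q)"
proof -
  let ?a = "\<lambda>n. h ^ n / fact n * matpow Q n x y"
  let ?e = "\<lambda>n. Kb Q ^ n / fact n"
  have s: "summable ?a" by (rule trans_summable)
  have 1: "trans_fun Q h x y = (\<Sum>n. ?a (n+2)) + sum ?a {..<2}"
    using suminf_split_initial_segment[OF s, of 2] by (simp add: trans_fun_def)
  have 2: "sum ?a {..<2} = (if x=y then 1 else 0) + h * Q x y"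
    by (simp add: numeral_2_eq_2 del: matpow.simps(2))
  have se: "summable (\<lambda>n. ?e (n+2))"
    by (rule summable_iff_shift[where k=2 and f="\<lambda>n. Kb Q ^ n / fact n", THEN iffD2]) (rule summable_expK)
  have 3: "norm (\<Sum>n. ?a (n+2)) \<le> (\<Sum>n. h^2 * ?e (n+2))"
  proof (rule norm_suminf_le)
    fix n
    have "\<bar>?a (n+2)\<bar> = h ^ (n+2) / fact (n+2) * \<bar>matpow Q (n+2) x y\<bar>"
      using h by (simp add: abs_mult del: matpow.simps)
    also have "\<dots> \<le> h ^ (n+2) / fact (n+2) * Kb Q ^ (n+2)"
      by (intro mult_left_mono matpow_bound) (use h in auto)
    also have "\<dots> \<le> h^2 * ?e (n+2)"
    proof -
      have "h ^ (n+2) \<le> h ^ 2" by (rule power_decreasing) (use h in auto)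
      then show ?thesis using Kb_nonneg[of Q]
        by (simp add: divide_simps mult_right_mono)
    qed
    finally show "norm (?a (n+2)) \<le> h^2 * ?e (n+2)" by simp
  next
    show "summable (\<lambda>n. h^2 * ?e (n+2))" using se by (rule summable_mult)
  qed
  have 4: "(\<Sum>n. h^2 * ?e (n+2)) \<le> h^2 * exp (Kb Q)"
  proof -
    have "(\<Sum>n. h^2 * ?e (n+2)) = h^2 * (\<Sum>n. ?e (n+2))" using se by (rule suminf_mult)
    also have "(\<Sum>n. ?e (n+2)) = exp (Kb Q) - sum ?e {..<2}"
      using suminf_split_initial_segment[OF summable_expK[of "Kb Q"], of 2] exp_suminf[of "Kb Q"] by simp
    also have "\<dots> \<le> exp (Kb Q)" using Kb_nonneg[of Q] by (simp add: sum_nonneg)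
    finally show ?thesis by (simp add: mult_left_mono)
  qed
  show ?thesis using 1 2 3 4 unfolding real_norm_def by linarith
qed

definition Tf :: "('s::finite \<Rightarrow> 's \<Rightarrow> real) \<Rightarrow> real \<Rightarrow> ('s \<Rightarrow> real) \<Rightarrow> 's \<Rightarrow> real" where
  "Tf Q h \<phi> x = (\<Sum>z\<in>UNIV. trans_fun Q h x z * \<phi> z)"
definition Gf :: "('s::finite \<Rightarrow> 's \<Rightarrow> real) \<Rightarrow> ('s \<Rightarrow> real) \<Rightarrow> 's \<Rightarrow> real" where
  "Gf Q \<phi> x = (\<Sum>z\<in>UNIV. Q x z * \<phi> z)"

lemma Tf_approx:
  assumes h: "0 \<le> h" "h \<le> 1"
  shows "\<bar>Tf Q h \<phi> x - \<phi> x - h * Gf Q \<phi> x\<bar> \<le> h^2 * (exp (Kb Q) * (\<Sum>z\<in>UNIV. \<bar>\<phi> z\<bar>))"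
proof -
  have "Tf Q h \<phi> x - \<phi> x - h * Gf Q \<phi> x =
        (\<Sum>z\<in>UNIV. (trans_fun Q h x z - ((if x = z then 1 else 0) + h * Q x z)) * \<phi> z)"
  proof -
    have d: "(\<Sum>z\<in>UNIV. (if x = z then 1 else 0) * \<phi> z) = \<phi> x"
    proof -
      have "\<And>z. (if x = z then 1 else 0) * \<phi> z = (if x = z then \<phi> x else 0)" by auto
      then show ?thesis by (simp add: sum.delta)
    qed
    have "(\<Sum>z\<in>UNIV. (trans_fun Q h x z - ((if x = z then 1 else 0) + h * Q x z)) * \<phi> z)
       = (\<Sum>z\<in>UNIV. trans_fun Q h x z * \<phi> z) - (\<Sum>z\<in>UNIV. (if x = z then 1 else 0) * \<phi> z)
         - h * (\<Sum>z\<in>UNIV. Q x z * \<phi> z)"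
      by (simp add: algebra_simps sum_subtractf sum.distrib sum_distrib_left)
    then show ?thesis by (simp add: d Tf_def Gf_def)
  qed
  also have "\<bar>\<dots>\<bar> \<le> (\<Sum>z\<in>UNIV. \<bar>trans_fun Q h x z - ((if x = z then 1 else 0) + h * Q x z)\<bar> * \<bar>\<phi> z\<bar>)"
    by (simp add: abs_mult[symmetric] sum_abs)
  also have "\<dots> \<le> (\<Sum>z\<in>UNIV. h^2 * exp (Kb Q) * \<bar>\<phi> z\<bar>)"
    by (intro sum_mono mult_right_mono trans_approx h) auto
  finally show ?thesis by (simp add: sum_distrib_left mult.assoc)
qed

lemma Gf_bound: "\<bar>Gf Q \<phi> x\<bar> \<le> Kb Q * (\<Sum>z\<in>UNIV. \<bar>\<phi> z\<bar>)"
proof -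
  have "\<bar>Gf Q \<phi> x\<bar> \<le> (\<Sum>z\<in>UNIV. \<bar>Q x z\<bar> * \<bar>\<phi> z\<bar>)"
    by (simp add: Gf_def abs_mult[symmetric] sum_abs)
  also have "\<dots> \<le> (\<Sum>z\<in>UNIV. Kb Q * \<bar>\<phi> z\<bar>)"
  proof (intro sum_mono mult_right_mono)
    fix z show "\<bar>Q x z\<bar> \<le> Kb Q" using row_le_Kb[of Q x]
      by (meson abs_ge_zero member_le_sum order_trans finite UNIV_I)
  qed auto
  finally show ?thesis by (simp add: sum_distrib_left)
qed

lemma Tf_lip:
  assumes h: "0 \<le> h" "h \<le> 1"
  shows "\<bar>Tf Q h \<phi> x - \<phi> x\<bar> \<le> h * ((Kb Q + exp (Kb Q)) * (\<Sum>z\<in>UNIV. \<bar>\<phi> z\<bar>))"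
proof -
  let ?S = "\<Sum>z\<in>UNIV. \<bar>\<phi> z\<bar>"
  have S: "0 \<le> ?S" by (simp add: sum_nonneg)
  have a: "\<bar>Tf Q h \<phi> x - \<phi> x - h * Gf Q \<phi> x\<bar> \<le> h^2 * (exp (Kb Q) * ?S)" by (rule Tf_approx[OF h])
  have b: "h^2 * (exp (Kb Q) * ?S) \<le> h * (exp (Kb Q) * ?S)"
    using h S by (simp add: power2_eq_square mult_right_mono_neg mult_left_le_one_le mult_right_mono)
  have c: "\<bar>h * Gf Q \<phi> x\<bar> \<le> h * (Kb Q * ?S)"
    using Gf_bound[of Q \<phi> x] h by (simp add: abs_mult mult_left_mono)
  have t: "\<bar>Tf Q h \<phi> x - \<phi> x\<bar> \<le> \<bar>Tf Q h \<phi> x - \<phi> x - h * Gf Q \<phi> x\<bar> + \<bar>h * Gf Q \<phi> x\<bar>"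
    by (smt (verit))
  have r: "h * ((Kb Q + exp (Kb Q)) * ?S) = h * (Kb Q * ?S) + h * (exp (Kb Q) * ?S)"
    by (simp add: algebra_simps)
  show ?thesis using a b c t r by linarith
qed

lemma stationary_unique:
  fixes Q :: "'s::finite \<Rightarrow> 's \<Rightarrow> real"
  assumes irr: "irreducible_gen Q" and st: "\<And>y. (\<Sum>x\<in>UNIV. \<mu> x * Q x y) = 0"
    and s0: "(\<Sum>x\<in>UNIV. \<mu> x) = 0"
  shows "\<mu> x = 0"
proof -
  have gen: "generator Q" using irr by (simp add: irreducible_gen_def)
  have off: "\<And>a b. a \<noteq> b \<Longrightarrow> 0 \<le> Q a b" using gen by (simp add: generator_def)
  have rows: "\<And>a. (\<Sum>b\<in>UNIV. Q a b) = 0" using gen by (simp add: generator_def)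
  have split: "\<And>(g::'s \<Rightarrow> real) y. (\<Sum>x\<in>UNIV. g x) = g y + (\<Sum>x\<in>UNIV-{y}. g x)"
    by (rule sum.remove) auto
  have diag: "Q y y \<le> 0" for y
  proof -
    have "0 = Q y y + (\<Sum>b\<in>UNIV-{y}. Q y b)" using rows[of y] split[of "Q y" y] by simp
    moreover have "0 \<le> (\<Sum>b\<in>UNIV-{y}. Q y b)" by (intro sum_nonneg off) auto
    ultimately show ?thesis by linarith
  qed
  have absge: "0 \<le> (\<Sum>x\<in>UNIV. \<bar>\<mu> x\<bar> * Q x y)" for y
  proof -
    have e: "(\<Sum>x\<in>UNIV-{y}. \<mu> x * Q x y) = - (\<mu> y * Q y y)"
      using st[of y] split[of "\<lambda>x. \<mu> x * Q x y" y] by linarith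
    have "\<bar>\<Sum>x\<in>UNIV-{y}. \<mu> x * Q x y\<bar> \<le> (\<Sum>x\<in>UNIV-{y}. \<bar>\<mu> x\<bar> * Q x y)"
      by (rule order_trans[OF sum_abs], rule sum_mono) (simp add: abs_mult off abs_of_nonneg)
    then have "\<bar>\<mu> y\<bar> * \<bar>Q y y\<bar> \<le> (\<Sum>x\<in>UNIV-{y}. \<bar>\<mu> x\<bar> * Q x y)" using e by (simp add: abs_mult)
    moreover have "\<bar>Q y y\<bar> = - Q y y" using diag[of y] by simp
    ultimately show ?thesis using split[of "\<lambda>x. \<bar>\<mu> x\<bar> * Q x y" y] by simp
  qed
  have abssum: "(\<Sum>y\<in>UNIV. \<Sum>x\<in>UNIV. \<bar>\<mu> x\<bar> * Q x y) = 0"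
    by (subst sum.swap) (simp add: sum_distrib_left[symmetric] rows)
  have absst: "(\<Sum>x\<in>UNIV. \<bar>\<mu> x\<bar> * Q x y) = 0" for y
    using sum_nonneg_eq_0_iff[of UNIV "\<lambda>y. \<Sum>x\<in>UNIV. \<bar>\<mu> x\<bar> * Q x y"] abssum absge by auto
  define \<rho> where "\<rho> x = (\<bar>\<mu> x\<bar> + \<mu> x) / 2" for x
  have \<rho>st: "(\<Sum>x\<in>UNIV. \<rho> x * Q x y) = 0" for y
    using absst[of y] st[of y] by (simp add: \<rho>_def add_divide_distrib sum.distrib distrib_right sum_divide_distrib[symmetric])
  have \<rho>nn: "0 \<le> \<rho> x" for x by (simp add: \<rho>_def)
  have zero_pred: "\<rho> a = 0" if "\<rho> b = 0" "a \<noteq> b" "0 < Q a b" for a b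
  proof -
    have "(\<Sum>x\<in>UNIV-{b}. \<rho> x * Q x b) = 0" using \<rho>st[of b] split[of "\<lambda>x. \<rho> x * Q x b" b] that by simp
    then have "\<forall>x\<in>UNIV-{b}. \<rho> x * Q x b = 0"
      by (subst sum_nonneg_eq_0_iff[symmetric]) (auto intro!: mult_nonneg_nonneg \<rho>nn off)
    then show ?thesis using that by auto
  qed
  have propag: "(a, b) \<in> {(a, b). a \<noteq> b \<and> 0 < Q a b}\<^sup>* \<Longrightarrow> \<rho> b = 0 \<Longrightarrow> \<rho> a = 0" for a b
    by (induction rule: converse_rtrancl_induct) (auto intro: zero_pred)
  have conn: "\<And>a b. (a, b) \<in> {(a, b). a \<noteq> b \<and> 0 < Q a b}\<^sup>*" using irr by (simp add: irreducible_gen_def)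
  show ?thesis
  proof (cases "\<exists>y. \<mu> y \<le> 0")
    case True
    then obtain y where "\<mu> y \<le> 0" by auto
    then have "\<rho> y = 0" by (simp add: \<rho>_def)
    then have "\<rho> a = 0" for a using propag conn by blast
    then have npos: "\<mu> a \<le> 0" for a by (simp add: \<rho>_def) (smt (verit))
    have "(\<Sum>x\<in>UNIV. - \<mu> x) = 0" using s0 by (simp add: sum_negf)
    then have "\<forall>x\<in>UNIV. - \<mu> x = 0" by (subst sum_nonneg_eq_0_iff[symmetric]) (auto simp: npos)
    then show ?thesis by simp
  next
    case False
    then have "0 < (\<Sum>x\<in>UNIV. \<mu> x)" by (intro sum_pos) (auto simp: not_le)
    then show ?thesis using s0 by simp
  qed
qed

lemma prod_gen_snd:
  fixes QU :: "'u::finite \<Rightarrow> 'u \<Rightarrow> real" and QV :: "'v::finite \<Rightarrow> 'v \<Rightarrow> real"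
  assumes "generator QU"
  shows "Gf (prod_gen QU QV) (\<lambda>q. f (snd q)) p = Gf QV f (snd p)"
proof -
  obtain u0 w0 where p: "p = (u0, w0)" by (cases p)
  have "Gf (prod_gen QU QV) (\<lambda>q. f (snd q)) p = (\<Sum>u\<in>UNIV. \<Sum>w\<in>UNIV. prod_gen QU QV p (u, w) * f w)"
    unfolding Gf_def by (simp add: UNIV_Times_UNIV[symmetric] sum.cartesian_product case_prod_unfold del: UNIV_Times_UNIV)
  also have "\<dots> = (\<Sum>u\<in>UNIV. QU u0 u * f w0) + (\<Sum>w\<in>UNIV. QV w0 w * f w)"
  proof -
    have e: "\<And>u w. prod_gen QU QV p (u,w) * f w = (if w = w0 then QU u0 u * f w0 else 0) + (if u = u0 then QV w0 w * f w else 0)"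
      by (auto simp: p prod_gen_def distrib_right)
    have e2: "\<And>u. (\<Sum>w\<in>UNIV. if u = u0 then QV w0 w * f w else 0) = (if u = u0 then (\<Sum>w\<in>UNIV. QV w0 w * f w) else 0)"
      by simp
    show ?thesis by (simp only: e sum.distrib e2 sum.delta sum.delta' finite UNIV_I if_True)
  qed
  also have "(\<Sum>u\<in>UNIV. QU u0 u * f w0) = 0"
    using assms by (simp add: generator_def sum_distrib_right[symmetric])
  finally show ?thesis by (simp add: Gf_def p)
qed


locale ctmc_setup =
  fixes M :: "'a measure" and Q :: "'s::finite \<Rightarrow> 's \<Rightarrow> real" and X :: "real \<Rightarrow> 'a \<Rightarrow> 's"
  assumes prob: "prob_space M" and ctmc: "ctmc M Q X"
begin

sublocale prob_space M by (rule prob)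

lemma Xmeas: "0 \<le> t \<Longrightarrow> X t \<in> measurable M (count_space UNIV)"
  using ctmc by (simp add: ctmc_def)

lemma rc: "\<omega> \<in> space M \<Longrightarrow> 0 \<le> t \<Longrightarrow> \<exists>e>0. \<forall>s. t \<le> s \<and> s < t + e \<longrightarrow> X s \<omega> = X t \<omega>"
  using ctmc by (simp add: ctmc_def)

lemma fdd: "0 \<le> ts 0 \<Longrightarrow> (\<forall>i<n. ts i \<le> ts (Suc i)) \<Longrightarrow>
        prob {\<omega>\<in>space M. \<forall>i\<le>n. X (ts i) \<omega> = xs i} =
        prob {\<omega>\<in>space M. X (ts 0) \<omega> = xs 0} *
          (\<Prod>i<n. trans_fun Q (ts (Suc i) - ts i) (xs i) (xs (Suc i)))"
  using ctmc unfolding ctmc_def by blast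

definition ev :: "real \<Rightarrow> 's \<Rightarrow> 'a set" where "ev s y = {\<omega>\<in>space M. X s \<omega> = y}"
definition cyl :: "(real \<times> 's) set \<Rightarrow> 'a set" where "cyl S = {\<omega>\<in>space M. \<forall>(s,y)\<in>S. X s \<omega> = y}"

lemma ev_sets[measurable]: "0 \<le> s \<Longrightarrow> ev s y \<in> sets M"
proof -
  assume "0 \<le> s"
  then have "X s -` {y} \<inter> space M \<in> sets M" by (rule measurable_sets[OF Xmeas]) auto
  moreover have "X s -` {y} \<inter> space M = ev s y" by (auto simp: ev_def)
  ultimately show ?thesis by simp
qed

lemma cyl_insert: "cyl (insert (s,y) S) = ev s y \<inter> cyl S" by (auto simp: cyl_def ev_def)
lemma cyl_empty: "cyl {} = space M" by (simp add: cyl_def)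
lemma cyl_Un: "cyl (S \<union> S') = cyl S \<inter> cyl S'" unfolding cyl_def by (auto simp: case_prod_beta)

lemma cyl_sets: "finite S \<Longrightarrow> \<forall>(s,y)\<in>S. 0 \<le> s \<Longrightarrow> cyl S \<in> sets M"
proof (induction S rule: finite_induct)
  case empty then show ?case by (simp add: cyl_empty)
next
  case (insert p S)
  obtain s y where p: "p = (s,y)" by (cases p)
  show ?case using insert by (auto simp: p cyl_insert intro!: sets.Int ev_sets)
qed

lemma core:
  assumes fin: "finite S" and times: "\<forall>(s,y)\<in>S. 0 \<le> s \<and> s \<le> t" and tx: "(t,x) \<in> S" and h: "0 \<le> h"
  shows "prob (cyl (insert (t+h,z) S)) = prob (cyl S) * trans_fun Q h x z"
proof (cases "\<exists>s y y'. (s,y)\<in>S \<and> (s,y')\<in>S \<and> y \<noteq> y'")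
  case True
  then obtain s y y' where sy: "(s,y)\<in>S" "(s,y')\<in>S" "y \<noteq> y'" by blast
  have "cyl S = {}"
  proof -
    { fix \<omega> assume "\<omega> \<in> cyl S"
      then have "X s \<omega> = y" "X s \<omega> = y'" using sy(1,2) unfolding cyl_def by auto
      then have False using sy(3) by simp }
    then show ?thesis by blast
  qed
  moreover have "cyl (insert (t+h,z) S) \<subseteq> cyl S" by (auto simp: cyl_def)
  ultimately show ?thesis by simp
next
  case False
  then have func: "\<And>s y y'. (s,y)\<in>S \<Longrightarrow> (s,y')\<in>S \<Longrightarrow> y = y'" by blast
  define T where "T = fst ` S"
  define L where "L = sorted_list_of_set T"
  define n where "n = length L - 1"
  define g where "g s = (THE y. (s,y)\<in>S)" for s
  have gS: "g s = y" if "(s,y)\<in>S" for s y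
    unfolding g_def using that func by (intro the_equality) auto
  have finT: "finite T" using fin by (simp add: T_def)
  have setL: "set L = T" using finT by (simp add: L_def)
  have sortL: "sorted L" by (simp add: L_def)
  have tT: "t \<in> T" using tx by (force simp: T_def)
  have lenL: "length L = Suc n" using setL tT unfolding n_def by (cases L) auto
  have Tle: "s \<in> T \<Longrightarrow> 0 \<le> s \<and> s \<le> t" for s using times by (auto simp: T_def)
  have LT: "i \<le> n \<Longrightarrow> L ! i \<in> T" for i using setL lenL by (metis le_imp_less_Suc nth_mem)
  have Ln: "L ! n = t"
  proof -
    obtain j where j: "j < length L" "L ! j = t" using tT setL by (metis in_set_conv_nth)
    have "L ! j \<le> L ! n" using sortL j lenL by (intro sorted_nth_mono) auto
    moreover have "L ! n \<le> t" using Tle[OF LT[of n]] by simp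
    ultimately show ?thesis using j by simp
  qed
  define ts where "ts i = (if i \<le> n then L ! i else t + h)" for i
  define xs where "xs i = (if i \<le> n then g (L ! i) else z)" for i
  have c1: "cyl S = {\<omega>\<in>space M. \<forall>i\<le>n. X (ts i) \<omega> = xs i}"
  proof (intro set_eqI iffI)
    fix \<omega> assume \<omega>: "\<omega> \<in> cyl S"
    show "\<omega> \<in> {\<omega>\<in>space M. \<forall>i\<le>n. X (ts i) \<omega> = xs i}"
    proof (safe)
      show "\<omega> \<in> space M" using \<omega> by (simp add: cyl_def)
      fix i assume i: "i \<le> n"
      obtain y where y: "(L ! i, y) \<in> S" using LT[OF i] by (auto simp: T_def)
      then show "X (ts i) \<omega> = xs i" using \<omega> i gS[OF y] by (auto simp: cyl_def ts_def xs_def)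
    qed
  next
    fix \<omega> assume \<omega>: "\<omega> \<in> {\<omega>\<in>space M. \<forall>i\<le>n. X (ts i) \<omega> = xs i}"
    show "\<omega> \<in> cyl S" unfolding cyl_def
    proof (safe)
      show "\<omega> \<in> space M" using \<omega> by simp
      fix s y assume sy: "(s,y) \<in> S"
      then have "s \<in> set L" using setL by (force simp: T_def)
      then obtain i where i: "i < length L" "L ! i = s" by (metis in_set_conv_nth)
      then have "i \<le> n" using lenL by simp
      then show "X s \<omega> = y" using \<omega> i gS[OF sy] by (auto simp: ts_def xs_def)
    qed
  qed
  have c2: "cyl (insert (t+h,z) S) = {\<omega>\<in>space M. \<forall>i\<le>Suc n. X (ts i) \<omega> = xs i}"
  proof -
    have allS: "\<And>P. (\<forall>i\<le>Suc n. P i) = ((\<forall>i\<le>n. P i) \<and> P (Suc n))" by (auto simp: le_Suc_eq)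
    have tsn: "ts (Suc n) = t + h" and xsn: "xs (Suc n) = z" by (simp_all add: ts_def xs_def)
    show ?thesis
    proof (rule set_eqI)
      fix \<omega>
      show "\<omega> \<in> cyl (insert (t+h,z) S) \<longleftrightarrow> \<omega> \<in> {\<omega>\<in>space M. \<forall>i\<le>Suc n. X (ts i) \<omega> = xs i}"
        unfolding cyl_insert c1 allS ev_def tsn xsn by auto
    qed
  qed
  have ts0: "0 \<le> ts 0" using Tle[OF LT[of 0]] by (simp add: ts_def)
  have mono: "\<forall>i<Suc n. ts i \<le> ts (Suc i)"
  proof (intro allI impI)
    fix i assume "i < Suc n"
    then consider "i < n" | "i = n" by linarith
    then show "ts i \<le> ts (Suc i)"
    proof cases
      case 1 then show ?thesis using sortL lenL by (simp add: ts_def sorted_nth_mono)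
    next
      case 2 then show ?thesis using Ln h by (simp add: ts_def)
    qed
  qed
  have xn: "xs n = x" using gS[OF tx] Ln by (simp add: xs_def)
  have "prob (cyl (insert (t+h,z) S)) = prob {\<omega>\<in>space M. X (ts 0) \<omega> = xs 0} *
          (\<Prod>i<Suc n. trans_fun Q (ts (Suc i) - ts i) (xs i) (xs (Suc i)))"
    unfolding c2 by (rule fdd[OF ts0 mono])
  also have "\<dots> = (prob {\<omega>\<in>space M. X (ts 0) \<omega> = xs 0} *
          (\<Prod>i<n. trans_fun Q (ts (Suc i) - ts i) (xs i) (xs (Suc i)))) * trans_fun Q h x z"
  proof -
    have tsn': "ts n = t" using Ln by (simp add: ts_def)
    have "ts (Suc n) - ts n = h" using tsn' by (simp add: ts_def)
    moreover have "xs (Suc n) = z" by (simp add: xs_def)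
    ultimately show ?thesis using xn by (simp only: prod.lessThan_Suc mult.assoc)
  qed
  also have "prob {\<omega>\<in>space M. X (ts 0) \<omega> = xs 0} *
          (\<Prod>i<n. trans_fun Q (ts (Suc i) - ts i) (xs i) (xs (Suc i))) = prob (cyl S)"
    unfolding c1 by (rule sym, rule fdd[of ts n xs]) (use ts0 mono in auto)
  finally show ?thesis .
qed


definition cylG :: "real \<Rightarrow> 'a set set" where
  "cylG t = {cyl S | S. finite S \<and> (\<forall>(s,y)\<in>S. 0 \<le> s \<and> s \<le> t)}"

lemma filt_gens_pow: "{X s -` {z} \<inter> space M | s z. 0 \<le> s \<and> s \<le> t} \<subseteq> Pow (space M)" by auto

lemma space_filt: "space (nat_filtration M X t) = space M"
  unfolding nat_filtration_def by (rule space_measure_of[OF filt_gens_pow])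

lemma filt_sub: "A \<in> sets (nat_filtration M X t) \<Longrightarrow> A \<in> sigma_sets (space M) (cylG t)"
proof -
  let ?G = "{X s -` {z} \<inter> space M | s z. 0 \<le> s \<and> s \<le> t}"
  assume A: "A \<in> sets (nat_filtration M X t)"
  have "sets (nat_filtration M X t) = sigma_sets (space M) ?G"
    unfolding nat_filtration_def by (rule sets_measure_of[OF filt_gens_pow])
  moreover have "?G \<subseteq> cylG t"
  proof
    fix B assume "B \<in> ?G"
    then obtain s z where B: "B = X s -` {z} \<inter> space M" "0\<le>s" "s\<le>t" by auto
    then have "B = cyl {(s,z)}" by (auto simp: cyl_def)
    then show "B \<in> cylG t" using B(2,3) unfolding cylG_def by (intro CollectI exI[of _ "{(s,z)}"]) auto
  qed
  ultimately show ?thesis using A sigma_sets_mono' by blast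
qed

lemma cylG_sets: "cylG t \<subseteq> sets M"
  unfolding cylG_def by (auto intro!: cyl_sets)

lemma sig_sets: "sigma_sets (space M) (cylG t) \<subseteq> sets M"
  by (rule sets.sigma_sets_subset[OF cylG_sets])

lemma ev_sub: "ev s y \<subseteq> space M" by (auto simp: ev_def)

lemma markov_set:
  assumes t: "0 \<le> t" and h: "0 \<le> h" and A: "A \<in> sigma_sets (space M) (cylG t)"
  shows "prob (A \<inter> ev t x \<inter> ev (t+h) z) = prob (A \<inter> ev t x) * trans_fun Q h x z"
proof -
  let ?T = "trans_fun Q h x z"
  have stable: "Int_stable (cylG t)"
    unfolding Int_stable_def cylG_def
  proof (safe)
    fix S S' :: "(real \<times> 's) set" assume "finite S" "\<forall>(s,y)\<in>S. 0 \<le> s \<and> s \<le> t" "finite S'" "\<forall>(s,y)\<in>S'. 0 \<le> s \<and> s \<le> t"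
    then show "\<exists>S''. cyl S \<inter> cyl S' = cyl S'' \<and> finite S'' \<and> (\<forall>(s,y)\<in>S''. 0 \<le> s \<and> s \<le> t)"
      by (intro exI[of _ "S \<union> S'"]) (auto simp: cyl_Un)
  qed
  have pow: "cylG t \<subseteq> Pow (space M)" by (auto simp: cylG_def cyl_def)
  have base: "prob (cyl S \<inter> ev t x \<inter> ev (t+h) z) = prob (cyl S \<inter> ev t x) * ?T"
    if S: "finite S" "\<forall>(s,y)\<in>S. 0 \<le> s \<and> s \<le> t" for S :: "(real \<times> 's) set"
  proof -
    have e1: "cyl S \<inter> ev t x = cyl (insert (t,x) S)" by (simp add: cyl_insert Int_commute)
    have e2: "cyl (insert (t,x) S) \<inter> ev (t+h) z = cyl (insert (t+h,z) (insert (t,x) S))"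
      by (simp add: cyl_insert Int_commute)
    show ?thesis unfolding e1 e2 by (rule core) (use S t h in auto)
  qed
  have Bs: "ev t x \<in> sets M" "ev (t+h) z \<in> sets M" using t h by (auto intro: ev_sets)
  have base0: "prob (ev t x \<inter> ev (t+h) z) = prob (ev t x) * ?T"
    using base[of "{}"] ev_sub[of t x] by (simp add: cyl_empty Int_absorb1)
  from stable pow A show ?thesis
  proof (induction rule: sigma_sets_induct_disjoint)
    case (basic A) then show ?case using base by (auto simp: cylG_def)
  next
    case empty then show ?case by simp
  next
    case (compl A)
    have As: "A \<in> sets M" using compl.hyps sig_sets by blast
    have eqc: "(space M - A) \<inter> ev t x \<inter> ev (t+h) z = (ev t x \<inter> ev (t+h) z) - (A \<inter> ev t x \<inter> ev (t+h) z)"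
      using ev_sub[of t x] by blast
    have 1: "prob ((space M - A) \<inter> ev t x \<inter> ev (t+h) z) = prob (ev t x \<inter> ev (t+h) z) - prob (A \<inter> ev t x \<inter> ev (t+h) z)"
      unfolding eqc using As Bs by (subst finite_measure_Diff) (auto intro: sets.Int)
    have eqc2: "(space M - A) \<inter> ev t x = ev t x - (A \<inter> ev t x)" using ev_sub[of t x] by blast
    have 2: "prob ((space M - A) \<inter> ev t x) = prob (ev t x) - prob (A \<inter> ev t x)"
      unfolding eqc2 using As Bs by (subst finite_measure_Diff) (auto intro: sets.Int)
    show ?case unfolding 1 2 base0 compl.IH by (simp add: algebra_simps)
  next
    case (union A)
    have As: "range A \<subseteq> sets M" using union.hyps(2) sig_sets by blast
    have d1: "disjoint_family (\<lambda>i. A i \<inter> ev t x \<inter> ev (t+h) z)"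
      using union.hyps(1) unfolding disjoint_family_on_def by blast
    have d2: "disjoint_family (\<lambda>i. A i \<inter> ev t x)"
      using union.hyps(1) unfolding disjoint_family_on_def by blast
    have r1: "range (\<lambda>i. A i \<inter> ev t x \<inter> ev (t+h) z) \<subseteq> sets M" using As Bs by auto
    have r2: "range (\<lambda>i. A i \<inter> ev t x) \<subseteq> sets M" using As Bs by auto
    have s1: "(\<lambda>i. prob (A i \<inter> ev t x \<inter> ev (t+h) z)) sums prob (\<Union>i. A i \<inter> ev t x \<inter> ev (t+h) z)"
      by (rule finite_measure_UNION[OF r1 d1])
    have s2: "(\<lambda>i. prob (A i \<inter> ev t x)) sums prob (\<Union>i. A i \<inter> ev t x)"
      by (rule finite_measure_UNION[OF r2 d2])
    have s2': "(\<lambda>i. prob (A i \<inter> ev t x) * ?T) sums (prob (\<Union>i. A i \<inter> ev t x) * ?T)"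
      by (rule sums_mult2[OF s2])
    have s1': "(\<lambda>i. prob (A i \<inter> ev t x) * ?T) sums prob (\<Union>i. A i \<inter> ev t x \<inter> ev (t+h) z)"
      using s1 union.IH by simp
    have "prob (\<Union>i. A i \<inter> ev t x \<inter> ev (t+h) z) = prob (\<Union>i. A i \<inter> ev t x) * ?T"
      using s1' s2' by (rule sums_unique2)
    moreover have "(\<Union>i. A i) \<inter> ev t x \<inter> ev (t+h) z = (\<Union>i. A i \<inter> ev t x \<inter> ev (t+h) z)" by auto
    moreover have "(\<Union>i. A i) \<inter> ev t x = (\<Union>i. A i \<inter> ev t x)" by auto
    ultimately show ?case by (simp only:)
  qed
qed

lemma prob_partition:
  assumes B: "B \<in> sets M" and s: "0 \<le> s"
  shows "prob B = (\<Sum>y\<in>UNIV. prob (B \<inter> ev s y))"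
proof -
  have "B = (\<Union>y\<in>UNIV. B \<inter> ev s y)" using sets.sets_into_space[OF B] by (auto simp: ev_def)
  moreover have "prob (\<Union>y\<in>UNIV. B \<inter> ev s y) = (\<Sum>y\<in>UNIV. prob (B \<inter> ev s y))"
  proof (rule finite_measure_finite_Union)
    show "(\<lambda>y. B \<inter> ev s y) ` UNIV \<subseteq> events" using B s ev_sets by auto
    show "disjoint_family_on (\<lambda>y. B \<inter> ev s y) UNIV" by (auto simp: disjoint_family_on_def ev_def)
  qed simp
  ultimately show ?thesis by simp
qed

lemma int_ind:
  assumes A: "A \<in> sets M" and s: "0 \<le> s"
  shows "(\<integral>\<omega>. indicator A \<omega> * \<phi> (X s \<omega>) \<partial>M) = (\<Sum>y\<in>UNIV. \<phi> y * prob (A \<inter> ev s y))"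
proof -
  have "(\<integral>\<omega>. indicator A \<omega> * \<phi> (X s \<omega>) \<partial>M) = (\<integral>\<omega>. (\<Sum>y\<in>UNIV. \<phi> y * indicator (A \<inter> ev s y) \<omega>) \<partial>M)"
  proof (rule Bochner_Integration.integral_cong[OF refl])
    fix \<omega> assume \<omega>: "\<omega> \<in> space M"
    have "\<And>y. \<phi> y * indicator (A \<inter> ev s y) \<omega> = (if y = X s \<omega> then indicator A \<omega> * \<phi> (X s \<omega>) else 0)"
      using \<omega> by (auto simp: ev_def indicator_def)
    then show "indicator A \<omega> * \<phi> (X s \<omega>) = (\<Sum>y\<in>UNIV. \<phi> y * indicator (A \<inter> ev s y) \<omega>)"
      by (simp add: sum.delta)
  qed
  also have "\<dots> = (\<Sum>y\<in>UNIV. \<phi> y * prob (A \<inter> ev s y))"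
  proof (rule trans[OF Bochner_Integration.integral_sum])
    show "integrable M (\<lambda>\<omega>. \<phi> y * indicator (A \<inter> ev s y) \<omega>)" for y
      using A s by (intro integrable_mult_right integrable_real_indicator) (auto intro: ev_sets simp: top.not_eq_extremum[symmetric] emeasure_finite)
    show "(\<Sum>y\<in>UNIV. integral\<^sup>L M (\<lambda>\<omega>. \<phi> y * indicator (A \<inter> ev s y) \<omega>)) = (\<Sum>y\<in>UNIV. \<phi> y * prob (A \<inter> ev s y))"
      using A s ev_sub[of s] by (intro sum.cong refl) (simp add: Int_absorb2 le_infI2)
  qed
  finally show ?thesis .
qed

lemma markov_exp:
  assumes t: "0 \<le> t" and h: "0 \<le> h" and A: "A \<in> sigma_sets (space M) (cylG t)"
  shows "(\<integral>\<omega>. indicator A \<omega> * \<phi> (X (t+h) \<omega>) \<partial>M) = (\<integral>\<omega>. indicator A \<omega> * Tf Q h \<phi> (X t \<omega>) \<partial>M)"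
proof -
  have As: "A \<in> sets M" using A sig_sets by blast
  have "(\<integral>\<omega>. indicator A \<omega> * \<phi> (X (t+h) \<omega>) \<partial>M) = (\<Sum>z\<in>UNIV. \<phi> z * prob (A \<inter> ev (t+h) z))"
    using As t h by (intro int_ind) auto
  also have "\<dots> = (\<Sum>z\<in>UNIV. \<phi> z * (\<Sum>x\<in>UNIV. prob (A \<inter> ev t x) * trans_fun Q h x z))"
  proof (intro sum.cong refl arg_cong2[where f="(*)"])
    fix z
    have "prob (A \<inter> ev (t+h) z) = (\<Sum>x\<in>UNIV. prob (A \<inter> ev (t+h) z \<inter> ev t x))"
      using As t h by (intro prob_partition) (auto intro: ev_sets)
    also have "\<dots> = (\<Sum>x\<in>UNIV. prob (A \<inter> ev t x \<inter> ev (t+h) z))"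
      by (simp add: Int_ac)
    also have "\<dots> = (\<Sum>x\<in>UNIV. prob (A \<inter> ev t x) * trans_fun Q h x z)"
      using markov_set[OF t h A] by simp
    finally show "prob (A \<inter> ev (t+h) z) = (\<Sum>x\<in>UNIV. prob (A \<inter> ev t x) * trans_fun Q h x z)" .
  qed
  also have "\<dots> = (\<Sum>z\<in>UNIV. \<Sum>x\<in>UNIV. prob (A \<inter> ev t x) * (trans_fun Q h x z * \<phi> z))"
    by (simp add: sum_distrib_left mult_ac)
  also have "\<dots> = (\<Sum>x\<in>UNIV. \<Sum>z\<in>UNIV. prob (A \<inter> ev t x) * (trans_fun Q h x z * \<phi> z))"
    by (rule sum.swap)
  also have "\<dots> = (\<Sum>x\<in>UNIV. Tf Q h \<phi> x * prob (A \<inter> ev t x))"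
    by (simp add: Tf_def sum_distrib_left mult_ac)
  also have "\<dots> = (\<integral>\<omega>. indicator A \<omega> * Tf Q h \<phi> (X t \<omega>) \<partial>M)"
    using As t by (intro int_ind[symmetric]) auto
  finally show ?thesis .
qed

end

definition cb :: "('s::finite \<Rightarrow> real) \<Rightarrow> real" where "cb \<psi> = (\<Sum>z\<in>UNIV. \<bar>\<psi> z\<bar>)"

lemma cb_bound: "\<bar>\<psi> x\<bar> \<le> cb \<psi>"
  unfolding cb_def by (rule member_le_sum[where f="\<lambda>z. \<bar>\<psi> z\<bar>"]) auto

lemma cb_nonneg: "0 \<le> cb \<psi>" by (simp add: cb_def sum_nonneg)

locale stopped = ctmc_setup M Q X for M :: "'a measure" and Q :: "'s::finite \<Rightarrow> 's \<Rightarrow> real" and X +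
  fixes \<tau> :: "'a \<Rightarrow> real"
  assumes st: "stopping_time (nat_filtration M X) \<tau>"
    and \<tau>nn: "\<And>\<omega>. \<omega> \<in> space M \<Longrightarrow> 0 \<le> \<tau> \<omega>"
    and \<tau>int: "integrable M \<tau>"
begin

definition Ak :: "real \<Rightarrow> nat \<Rightarrow> 'a set" where "Ak h k = {\<omega>\<in>space M. real k * h < \<tau> \<omega>}"
definition Nh :: "real \<Rightarrow> 'a \<Rightarrow> nat" where "Nh h \<omega> = nat \<lceil>\<tau> \<omega> / h\<rceil>"
definition R :: "real \<Rightarrow> ('s \<Rightarrow> real) \<Rightarrow> 'a \<Rightarrow> real" where "R h \<phi> \<omega> = \<phi> (X (real (Nh h \<omega>) * h) \<omega>)"
definition J :: "real \<Rightarrow> ('s \<Rightarrow> real) \<Rightarrow> 'a \<Rightarrow> real" where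
  "J h \<psi> \<omega> = (\<Sum>k. indicator (Ak h k) \<omega> * \<psi> (X (real (Suc k) * h) \<omega>)) * h"
definition I :: "('s \<Rightarrow> real) \<Rightarrow> 'a \<Rightarrow> real" where
  "I \<psi> \<omega> = (\<integral>s\<in>{0..\<tau> \<omega>}. \<psi> (X s \<omega>) \<partial>lborel)"

lemma \<tau>_le_sets: "{\<omega>\<in>space M. \<tau> \<omega> \<le> t} \<in> sets M"
proof -
  have "Measurable.pred (nat_filtration M X t) (\<lambda>x. \<tau> x \<le> t)" using st by (simp add: stopping_time_def)
  then have "{\<omega>\<in>space M. \<tau> \<omega> \<le> t} \<in> sets (nat_filtration M X t)"
    by (simp add: Measurable.pred_def space_filt)
  then show ?thesis using filt_sub sig_sets by blast
qed

lemma \<tau>_meas[measurable]: "\<tau> \<in> borel_measurable M"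
  using \<tau>_le_sets by (simp add: borel_measurable_iff_le)

lemma Ak_sig: "Ak h k \<in> sigma_sets (space M) (cylG (real k * h))"
proof -
  have "Measurable.pred (nat_filtration M X (real k * h)) (\<lambda>x. \<tau> x \<le> real k * h)"
    using st by (simp add: stopping_time_def)
  then have "{\<omega>\<in>space M. \<tau> \<omega> \<le> real k * h} \<in> sets (nat_filtration M X (real k * h))"
    by (simp add: Measurable.pred_def space_filt)
  then have "space M - {\<omega>\<in>space M. \<tau> \<omega> \<le> real k * h} \<in> sets (nat_filtration M X (real k * h))"
    using sets.compl_sets[of _ "nat_filtration M X (real k * h)"] by (simp add: space_filt)
  moreover have "space M - {\<omega>\<in>space M. \<tau> \<omega> \<le> real k * h} = Ak h k" by (auto simp: Ak_def)
  ultimately show ?thesis using filt_sub by simp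
qed

lemma Ak_sets[measurable]: "Ak h k \<in> sets M"
  using Ak_sig sig_sets by blast

lemma Ak_iff: "0 < h \<Longrightarrow> \<omega> \<in> space M \<Longrightarrow> \<omega> \<in> Ak h k \<longleftrightarrow> k < Nh h \<omega>"
proof -
  assume h: "0 < h" and \<omega>: "\<omega> \<in> space M"
  have "k < Nh h \<omega> \<longleftrightarrow> int k < \<lceil>\<tau> \<omega> / h\<rceil>" by (simp add: Nh_def zless_nat_eq_int_zless)
  also have "\<dots> \<longleftrightarrow> real k < \<tau> \<omega> / h" by (simp add: less_ceiling_iff)
  also have "\<dots> \<longleftrightarrow> real k * h < \<tau> \<omega>" using h by (simp add: pos_less_divide_eq)
  finally show ?thesis using \<omega> by (simp add: Ak_def)
qed

lemma Nh_le: "0 < h \<Longrightarrow> \<omega> \<in> space M \<Longrightarrow> real (Nh h \<omega>) * h < \<tau> \<omega> + h"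
proof -
  assume h: "0 < h" and \<omega>: "\<omega> \<in> space M"
  have "real (Nh h \<omega>) = of_int \<lceil>\<tau> \<omega> / h\<rceil>" using \<tau>nn[OF \<omega>] h by (simp add: Nh_def)
  also have "\<dots> < \<tau> \<omega> / h + 1" using ceiling_correct[of "\<tau> \<omega> / h"] by linarith
  finally show ?thesis using h by (simp add: field_simps)
qed

lemma Nh_ge: "0 < h \<Longrightarrow> \<omega> \<in> space M \<Longrightarrow> \<tau> \<omega> \<le> real (Nh h \<omega>) * h"
proof -
  assume h: "0 < h" and \<omega>: "\<omega> \<in> space M"
  have "\<tau> \<omega> / h \<le> of_int \<lceil>\<tau> \<omega> / h\<rceil>" by (rule le_of_int_ceiling)
  also have "\<dots> = real (Nh h \<omega>)" using \<tau>nn[OF \<omega>] h by (simp add: Nh_def)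
  finally show ?thesis using h by (simp add: field_simps)
qed

lemma Xf_meas[measurable]: "0 \<le> t \<Longrightarrow> (\<lambda>\<omega>. \<psi> (X t \<omega>) :: real) \<in> borel_measurable M"
  by (rule measurable_compose[OF Xmeas]) (auto simp: measurable_count_space_eq1)

lemma Nh_meas: "Nh h \<in> measurable M (count_space UNIV)"
  unfolding Nh_def by measurable

lemma R_meas: "0 \<le> h \<Longrightarrow> R h \<phi> \<in> borel_measurable M"
  unfolding R_def
  by (rule measurable_compose_countable'[where f="\<lambda>n \<omega>. \<phi> (X (real n * h) \<omega>)" and g="Nh h" and I=UNIV])
     (auto intro: Nh_meas)

lemma sum_ind_le: "0 < h \<Longrightarrow> \<omega> \<in> space M \<Longrightarrow> (\<Sum>k<K. indicator (Ak h k) \<omega>) \<le> \<tau> \<omega> / h + 1"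
proof -
  assume h: "0 < h" and \<omega>: "\<omega> \<in> space M"
  have "(\<Sum>k<K. indicator (Ak h k) \<omega> :: real) = (\<Sum>k<K. if k < Nh h \<omega> then 1 else 0)"
    using Ak_iff[OF h \<omega>] by (intro sum.cong) (auto simp: indicator_def)
  also have "\<dots> = real (card {k. k < K \<and> k < Nh h \<omega>})"
    by (simp add: sum.If_cases Int_def)
  also have "\<dots> \<le> real (Nh h \<omega>)"
  proof -
    have "{k. k < K \<and> k < Nh h \<omega>} \<subseteq> {..<Nh h \<omega>}" by auto
    then show ?thesis using card_mono[of "{..<Nh h \<omega>}"] by fastforce
  qed
  also have "\<dots> \<le> \<tau> \<omega> / h + 1" using Nh_le[OF h \<omega>] h by (simp add: field_simps)
  finally show ?thesis .
qed

lemma sumprob: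
  assumes h: "0 < h"
  shows "summable (\<lambda>k. prob (Ak h k))" "(\<Sum>k. prob (Ak h k)) \<le> expectation \<tau> / h + 1"
proof -
  have part: "sum (\<lambda>k. prob (Ak h k)) {..<K} \<le> expectation \<tau> / h + 1" for K
  proof -
    have "sum (\<lambda>k. prob (Ak h k)) {..<K} = (\<integral>\<omega>. (\<Sum>k<K. indicator (Ak h k) \<omega>) \<partial>M)"
      by (subst Bochner_Integration.integral_sum) (auto simp: top.not_eq_extremum[symmetric] emeasure_finite)
    also have "\<dots> \<le> (\<integral>\<omega>. \<tau> \<omega> / h + 1 \<partial>M)"
      by (intro integral_mono) (use \<tau>int sum_ind_le[OF h] in \<open>auto simp: top.not_eq_extremum[symmetric] emeasure_finite\<close>)
    also have "\<dots> = expectation \<tau> / h + 1"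
      using \<tau>int by (simp add: prob_space)
    finally show ?thesis .
  qed
  show "summable (\<lambda>k. prob (Ak h k))" by (rule summableI_nonneg_bounded[OF _ part]) simp
  show "(\<Sum>k. prob (Ak h k)) \<le> expectation \<tau> / h + 1"
    by (rule suminf_le_const[OF \<open>summable _\<close> part])
qed

lemma exp_bound:
  assumes A: "A \<in> sets M" and t: "0 \<le> t"
  shows "\<bar>\<integral>\<omega>. indicator A \<omega> * \<psi> (X t \<omega>) \<partial>M\<bar> \<le> cb \<psi> * prob A"
proof -
  have "\<bar>\<integral>\<omega>. indicator A \<omega> * \<psi> (X t \<omega>) \<partial>M\<bar> = \<bar>\<Sum>y\<in>UNIV. \<psi> y * prob (A \<inter> ev t y)\<bar>"
    using int_ind[OF A t] by simp
  also have "\<dots> \<le> (\<Sum>y\<in>UNIV. cb \<psi> * prob (A \<inter> ev t y))"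
    by (rule order_trans[OF sum_abs], rule sum_mono) (simp add: abs_mult cb_bound mult_right_mono)
  also have "\<dots> = cb \<psi> * prob A"
    using prob_partition[OF A t] by (simp add: sum_distrib_left)
  finally show ?thesis .
qed

lemma suminf_exch:
  fixes \<psi>k :: "nat \<Rightarrow> 'a \<Rightarrow> real" and B :: real
  assumes h: "0 < h" and meas: "\<And>k. \<psi>k k \<in> borel_measurable M"
    and bnd: "\<And>k \<omega>. \<omega> \<in> space M \<Longrightarrow> \<bar>\<psi>k k \<omega>\<bar> \<le> B"
  shows "integrable M (\<lambda>\<omega>. \<Sum>k. indicator (Ak h k) \<omega> * \<psi>k k \<omega>)"
    and "(\<integral>\<omega>. (\<Sum>k. indicator (Ak h k) \<omega> * \<psi>k k \<omega>) \<partial>M) = (\<Sum>k. \<integral>\<omega>. indicator (Ak h k) \<omega> * \<psi>k k \<omega> \<partial>M)"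
    and "summable (\<lambda>k. \<integral>\<omega>. indicator (Ak h k) \<omega> * \<psi>k k \<omega> \<partial>M)"
proof -
  have B: "0 \<le> B"
  proof -
    obtain \<omega> where "\<omega> \<in> space M" using not_empty by blast
    then have "\<bar>\<psi>k 0 \<omega>\<bar> \<le> B" by (rule bnd)
    then show ?thesis by (meson abs_ge_zero order_trans)
  qed
  have int: "integrable M (\<lambda>\<omega>. indicator (Ak h k) \<omega> * \<psi>k k \<omega>)" for k
  proof (rule integrable_const_bound[where B=B])
    show "AE x in M. norm (indicator (Ak h k) x * \<psi>k k x) \<le> B"
      using bnd B by (intro AE_I2) (auto simp: indicator_def)
  qed (use meas in measurable)
  have summ: "AE \<omega> in M. summable (\<lambda>k. norm (indicator (Ak h k) \<omega> * \<psi>k k \<omega>))"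
  proof (rule AE_I2)
    fix \<omega> assume \<omega>: "\<omega> \<in> space M"
    show "summable (\<lambda>k. norm (indicator (Ak h k) \<omega> * \<psi>k k \<omega>))"
      by (rule summable_finite[of "{..<Nh h \<omega>}"]) (use Ak_iff[OF h \<omega>] in \<open>auto simp: indicator_def\<close>)
  qed
  have nb: "(\<integral>\<omega>. norm (indicator (Ak h k) \<omega> * \<psi>k k \<omega>) \<partial>M) \<le> B * prob (Ak h k)" for k
  proof -
    have ii: "integrable M (\<lambda>\<omega>. B * indicator (Ak h k) \<omega>)"
      by (intro integrable_mult_right integrable_real_indicator) (auto simp: top.not_eq_extremum[symmetric] emeasure_finite)
    have "(\<integral>\<omega>. norm (indicator (Ak h k) \<omega> * \<psi>k k \<omega>) \<partial>M) \<le> (\<integral>\<omega>. B * indicator (Ak h k) \<omega> \<partial>M)"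
      by (intro integral_mono ii integrable_norm int) (use bnd in \<open>auto simp: indicator_def\<close>)
    then show ?thesis by simp
  qed
  have sums: "summable (\<lambda>k. \<integral>\<omega>. norm (indicator (Ak h k) \<omega> * \<psi>k k \<omega>) \<partial>M)"
    by (rule summable_comparison_test[OF _ summable_mult[OF sumprob(1)[OF h], of B]])
       (use nb in \<open>auto intro!: exI[of _ 0]\<close>)
  show "integrable M (\<lambda>\<omega>. \<Sum>k. indicator (Ak h k) \<omega> * \<psi>k k \<omega>)"
    by (rule integrable_suminf[OF int summ sums])
  show "(\<integral>\<omega>. (\<Sum>k. indicator (Ak h k) \<omega> * \<psi>k k \<omega>) \<partial>M) = (\<Sum>k. \<integral>\<omega>. indicator (Ak h k) \<omega> * \<psi>k k \<omega> \<partial>M)"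
    by (rule integral_suminf[OF int summ sums])
  show "summable (\<lambda>k. \<integral>\<omega>. indicator (Ak h k) \<omega> * \<psi>k k \<omega> \<partial>M)"
    by (rule summable_integral[OF int summ sums])
qed


definition ee :: "'a set \<Rightarrow> real \<Rightarrow> ('s \<Rightarrow> real) \<Rightarrow> real" where
  "ee A t \<psi> = (\<Sum>y\<in>UNIV. \<psi> y * prob (A \<inter> ev t y))"

lemma int_bdd: fixes \<psi> :: "'s \<Rightarrow> real" shows "A \<in> sets M \<Longrightarrow> 0 \<le> t \<Longrightarrow> integrable M (\<lambda>\<omega>. indicator A \<omega> * \<psi> (X t \<omega>))"
  by (rule integrable_const_bound[where B="cb \<psi>"])
     (auto intro!: AE_I2 simp: indicator_def cb_bound cb_nonneg)

lemma ee_int: fixes \<psi> :: "'s \<Rightarrow> real" shows "A \<in> sets M \<Longrightarrow> 0 \<le> t \<Longrightarrow> (\<integral>\<omega>. indicator A \<omega> * \<psi> (X t \<omega>) \<partial>M) = ee A t \<psi>"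
  unfolding ee_def by (rule int_ind)

lemma ee_bound:
  assumes A: "A \<in> sets M" and t: "0 \<le> t" and b: "\<And>x. \<bar>\<psi> x\<bar> \<le> B"
  shows "\<bar>ee A t \<psi>\<bar> \<le> B * prob A"
proof -
  have "\<bar>ee A t \<psi>\<bar> \<le> (\<Sum>y\<in>UNIV. B * prob (A \<inter> ev t y))"
    unfolding ee_def by (rule order_trans[OF sum_abs], rule sum_mono) (simp add: abs_mult b mult_right_mono)
  also have "\<dots> = B * prob A"
    using prob_partition[OF A t] by (simp add: sum_distrib_left)
  finally show ?thesis .
qed

lemma ee_markov:
  assumes "0 \<le> t" "0 \<le> h" "A \<in> sigma_sets (space M) (cylG t)"
  shows "ee A (t+h) \<phi> = ee A t (Tf Q h \<phi>)"
proof -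
  have As: "A \<in> sets M" using assms(3) sig_sets by blast
  show ?thesis using markov_exp[OF assms, of \<phi>] ee_int[OF As, of "t+h" \<phi>] ee_int[OF As, of t "Tf Q h \<phi>"] assms
    by simp
qed

lemma ee_lin: "ee A t (\<lambda>x. a * \<psi>1 x + b * \<psi>2 x) = a * ee A t \<psi>1 + b * ee A t \<psi>2"
  unfolding ee_def by (simp add: algebra_simps sum.distrib sum_distrib_left)

lemma dynkin_discrete:
  assumes h: "0 < h" "h \<le> 1"
  shows "\<bar>expectation (R h \<phi>) - expectation (\<lambda>\<omega>. \<phi> (X 0 \<omega>)) - expectation (J h (Gf Q \<phi>))\<bar>
          \<le> (exp (Kb Q) * cb \<phi> + (Kb Q + exp (Kb Q)) * cb (Gf Q \<phi>)) * h * (expectation \<tau> + 1)"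
proof -
  define g where "g = Gf Q \<phi>"
  define C where "C = exp (Kb Q) * cb \<phi> + (Kb Q + exp (Kb Q)) * cb g"
  define D where "D k \<omega> = \<phi> (X (real (Suc k) * h) \<omega>) - \<phi> (X (real k * h) \<omega>)" for k \<omega>
  define P where "P k = prob (Ak h k)" for k
  define a where "a k = (\<integral>\<omega>. indicator (Ak h k) \<omega> * D k \<omega> \<partial>M)" for k
  define b where "b k = (\<integral>\<omega>. indicator (Ak h k) \<omega> * g (X (real (Suc k) * h) \<omega>) \<partial>M)" for k
  have h0: "0 \<le> h" using h by simp
  have C0: "0 \<le> C" unfolding C_def by (intro add_nonneg_nonneg mult_nonneg_nonneg cb_nonneg) (auto simp: Kb_nonneg)
  have Dmeas: "D k \<in> borel_measurable M" for k
    unfolding D_def by (intro borel_measurable_diff Xf_meas) (use h0 in auto)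
  have Dbnd: "\<bar>D k \<omega>\<bar> \<le> 2 * cb \<phi>" for k \<omega>
    using cb_bound[of \<phi> "X (real (Suc k) * h) \<omega>"] cb_bound[of \<phi> "X (real k * h) \<omega>"] by (simp add: D_def)
  have gmeas: "(\<lambda>\<omega>. g (X (real (Suc k) * h) \<omega>)) \<in> borel_measurable M" for k
    by (intro Xf_meas) (use h0 in auto)
  note exD = suminf_exch[OF h(1) Dmeas Dbnd]
  note exG = suminf_exch[OF h(1) gmeas, where B="cb g", OF cb_bound]
  have tele: "R h \<phi> \<omega> - \<phi> (X 0 \<omega>) = (\<Sum>k. indicator (Ak h k) \<omega> * D k \<omega>)" if \<omega>: "\<omega> \<in> space M" for \<omega>
  proof -
    have "(\<Sum>k. indicator (Ak h k) \<omega> * D k \<omega>) = (\<Sum>k<Nh h \<omega>. indicator (Ak h k) \<omega> * D k \<omega>)"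
      by (rule suminf_finite) (use Ak_iff[OF h(1) \<omega>] in \<open>auto simp: indicator_def\<close>)
    also have "\<dots> = (\<Sum>k<Nh h \<omega>. D k \<omega>)"
      using Ak_iff[OF h(1) \<omega>] by (intro sum.cong) (auto simp: indicator_def)
    also have "\<dots> = \<phi> (X (real (Nh h \<omega>) * h) \<omega>) - \<phi> (X (real 0 * h) \<omega>)"
      unfolding D_def by (rule sum_lessThan_telescope[where f="\<lambda>n. \<phi> (X (real n * h) \<omega>)"])
    finally show ?thesis by (simp add: R_def)
  qed
  have Rint: "integrable M (R h \<phi>)"
    by (rule integrable_const_bound[where B="cb \<phi>"]) (auto intro!: AE_I2 R_meas h0 simp: R_def cb_bound)
  have X0int: "integrable M (\<lambda>\<omega>. \<phi> (X 0 \<omega>))"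
    by (rule integrable_const_bound[where B="cb \<phi>"]) (auto intro!: AE_I2 simp: cb_bound)
  have step1: "expectation (R h \<phi>) - expectation (\<lambda>\<omega>. \<phi> (X 0 \<omega>)) = (\<Sum>k. a k)"
  proof -
    have "expectation (R h \<phi>) - expectation (\<lambda>\<omega>. \<phi> (X 0 \<omega>)) = expectation (\<lambda>\<omega>. R h \<phi> \<omega> - \<phi> (X 0 \<omega>))"
      using Rint X0int by simp
    also have "\<dots> = expectation (\<lambda>\<omega>. \<Sum>k. indicator (Ak h k) \<omega> * D k \<omega>)"
      by (rule Bochner_Integration.integral_cong[OF refl tele])
    also have "\<dots> = (\<Sum>k. a k)" unfolding a_def by (rule exD(2))
    finally show ?thesis .
  qed
  have step2: "expectation (J h g) = h * (\<Sum>k. b k)"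
  proof -
    have "expectation (J h g) = expectation (\<lambda>\<omega>. \<Sum>k. indicator (Ak h k) \<omega> * g (X (real (Suc k) * h) \<omega>)) * h"
      unfolding J_def by simp
    also have "\<dots> = (\<Sum>k. b k) * h" unfolding b_def by (subst exG(2)) simp
    finally show ?thesis by simp
  qed
  have suma: "summable a" unfolding a_def by (rule exD(3))
  have sumb: "summable b" unfolding b_def by (rule exG(3))
  have key: "\<bar>a k - h * b k\<bar> \<le> C * h^2 * P k" for k
  proof -
    let ?A = "Ak h k" and ?t = "real k * h"
    have A: "?A \<in> sets M" by simp
    have t: "0 \<le> ?t" using h0 by simp
    have sig: "?A \<in> sigma_sets (space M) (cylG ?t)" by (rule Ak_sig)
    have Suc: "real (Suc k) * h = ?t + h" by (simp add: algebra_simps)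
    have "a k = (\<integral>\<omega>. indicator ?A \<omega> * \<phi> (X (?t + h) \<omega>) - indicator ?A \<omega> * \<phi> (X ?t \<omega>) \<partial>M)"
      unfolding a_def D_def Suc by (simp add: algebra_simps)
    also have "\<dots> = ee ?A (?t + h) \<phi> - ee ?A ?t \<phi>"
      using int_bdd[OF A, of "?t + h" \<phi>] int_bdd[OF A t, of \<phi>] t h0
      by (simp add: ee_int[OF A])
    also have "\<dots> = ee ?A ?t (Tf Q h \<phi>) - ee ?A ?t \<phi>" using ee_markov[OF t h0 sig] by simp
    finally have ak: "a k = ee ?A ?t (Tf Q h \<phi>) - ee ?A ?t \<phi>" .
    have "b k = ee ?A (?t + h) g" unfolding b_def Suc using t h0 by (simp add: ee_int[OF A])
    also have "\<dots> = ee ?A ?t (Tf Q h g)" using ee_markov[OF t h0 sig] by simp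
    finally have bk: "b k = ee ?A ?t (Tf Q h g)" .
    have split: "a k - h * b k = ee ?A ?t (\<lambda>x. Tf Q h \<phi> x - \<phi> x - h * g x) + h * ee ?A ?t (\<lambda>x. g x - Tf Q h g x)"
      unfolding ak bk ee_def by (simp add: algebra_simps sum.distrib sum_subtractf sum_distrib_left)
    have b1: "\<bar>ee ?A ?t (\<lambda>x. Tf Q h \<phi> x - \<phi> x - h * g x)\<bar> \<le> (h^2 * (exp (Kb Q) * cb \<phi>)) * P k"
      unfolding P_def by (rule ee_bound[OF A t]) (use Tf_approx[OF h0 h(2)] in \<open>simp add: g_def cb_def\<close>)
    have b2: "\<bar>ee ?A ?t (\<lambda>x. g x - Tf Q h g x)\<bar> \<le> (h * ((Kb Q + exp (Kb Q)) * cb g)) * P k"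
      unfolding P_def by (rule ee_bound[OF A t]) (use Tf_lip[OF h0 h(2)] in \<open>simp add: cb_def abs_minus_commute\<close>)
    have "\<bar>a k - h * b k\<bar> \<le> \<bar>ee ?A ?t (\<lambda>x. Tf Q h \<phi> x - \<phi> x - h * g x)\<bar> + h * \<bar>ee ?A ?t (\<lambda>x. g x - Tf Q h g x)\<bar>"
      unfolding split using h0 by (simp add: abs_mult abs_triangle_ineq[THEN order_trans])
    also have "\<dots> \<le> (h^2 * (exp (Kb Q) * cb \<phi>)) * P k + h * ((h * ((Kb Q + exp (Kb Q)) * cb g)) * P k)"
      using b1 b2 h0 by (intro add_mono mult_left_mono) auto
    also have "\<dots> = C * h^2 * P k" by (simp add: C_def power2_eq_square algebra_simps)
    finally show ?thesis .
  qed
  have sumP: "summable P" unfolding P_def by (rule sumprob(1)[OF h(1)])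
  have sumPle: "(\<Sum>k. P k) \<le> expectation \<tau> / h + 1" unfolding P_def by (rule sumprob(2)[OF h(1)])
  have diffsum: "expectation (R h \<phi>) - expectation (\<lambda>\<omega>. \<phi> (X 0 \<omega>)) - expectation (J h g) = (\<Sum>k. a k - h * b k)"
    unfolding step1 step2 using suminf_diff[OF suma summable_mult[OF sumb, of h]] suminf_mult[OF sumb, of h]
    by simp
  have "\<bar>\<Sum>k. a k - h * b k\<bar> \<le> (\<Sum>k. C * h^2 * P k)"
    using norm_suminf_le[of "\<lambda>k. a k - h * b k" "\<lambda>k. C * h^2 * P k"] key summable_mult[OF sumP, of "C * h^2"]
    by simp
  also have "\<dots> = C * h^2 * (\<Sum>k. P k)" using sumP by (rule suminf_mult)
  also have "\<dots> \<le> C * h^2 * (expectation \<tau> / h + 1)"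
    using sumPle C0 by (intro mult_left_mono) auto
  also have "\<dots> = C * h * (expectation \<tau> + h)" using h by (simp add: field_simps power2_eq_square)
  also have "\<dots> \<le> C * h * (expectation \<tau> + 1)" using h C0 by (intro mult_left_mono) auto
  finally show ?thesis using diffsum by (simp add: C_def g_def)
qed


definition hh :: "nat \<Rightarrow> real" where "hh m = inverse (real (Suc m))"

lemma hh_pos: "0 < hh m" by (simp add: hh_def)
lemma hh_le1: "hh m \<le> 1" by (simp add: hh_def inverse_le_1_iff)
lemma hh_lim: "hh \<longlonglongrightarrow> 0" unfolding hh_def by (rule LIMSEQ_inverse_real_of_nat)
lemma hh_ev: "0 < e \<Longrightarrow> eventually (\<lambda>m. hh m < e) sequentially"
  using order_tendstoD(2)[OF hh_lim] by blast

lemma floor_cell: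
  assumes h: "0 < h" and s: "0 \<le> s"
  shows "real (nat \<lfloor>s/h\<rfloor>) * h \<le> s" "s < real (Suc (nat \<lfloor>s/h\<rfloor>)) * h"
    "s \<in> {real k * h..<real (Suc k) * h} \<longleftrightarrow> k = nat \<lfloor>s/h\<rfloor>"
proof -
  have f0: "0 \<le> \<lfloor>s/h\<rfloor>" using h s by simp
  have r: "real (nat \<lfloor>s/h\<rfloor>) = of_int \<lfloor>s/h\<rfloor>" using f0 by simp
  have a: "of_int \<lfloor>s/h\<rfloor> \<le> s/h" "s/h < of_int \<lfloor>s/h\<rfloor> + 1" by (simp_all add: floor_less_cancel)
  show "real (nat \<lfloor>s/h\<rfloor>) * h \<le> s" using mult_right_mono[OF a(1), of h] h unfolding r by simp
  show "s < real (Suc (nat \<lfloor>s/h\<rfloor>)) * h" using a(2) h by (simp add: r pos_divide_less_eq algebra_simps)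
  have "s \<in> {real k * h..<real (Suc k) * h} \<longleftrightarrow> real k \<le> s/h \<and> s/h < real k + 1"
    using h by (simp add: pos_le_divide_eq pos_divide_less_eq algebra_simps)
  also have "\<dots> \<longleftrightarrow> \<lfloor>s/h\<rfloor> = int k" by (simp add: floor_eq_iff)
  also have "\<dots> \<longleftrightarrow> k = nat \<lfloor>s/h\<rfloor>" using f0 by auto
  finally show "s \<in> {real k * h..<real (Suc k) * h} \<longleftrightarrow> k = nat \<lfloor>s/h\<rfloor>" .
qed

lemma J_lim:
  assumes \<omega>: "\<omega> \<in> space M"
  shows "(\<lambda>m. J (hh m) \<psi> \<omega>) \<longlonglongrightarrow> I \<psi> \<omega>"
    and "\<And>m. \<bar>J (hh m) \<psi> \<omega>\<bar> \<le> cb \<psi> * (\<tau> \<omega> + 1)"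
proof -
  define T where "T = \<tau> \<omega>"
  have T0: "0 \<le> T" using \<tau>nn[OF \<omega>] by (simp add: T_def)
  define f where "f s = \<psi> (X s \<omega>)" for s
  define G where "G h s = (\<Sum>k<Nh h \<omega>. indicator {real k * h..<real (Suc k) * h} s * f (real (Suc k) * h))" for h s
  define F where "F s = indicator {0..<T} s * f s" for s
  have rcf: "\<exists>e>0. \<forall>r. s \<le> r \<and> r < s + e \<longrightarrow> f r = f s" if "0 \<le> s" for s
    using rc[OF \<omega> that] unfolding f_def by metis
  have kN: "0 < h \<Longrightarrow> k < Nh h \<omega> \<longleftrightarrow> real k * h < T" for h k
    using Ak_iff[OF _ \<omega>, of h k] \<omega> by (simp add: Ak_def T_def)
  have Jsum: "J h \<psi> \<omega> = (\<Sum>k<Nh h \<omega>. f (real (Suc k) * h)) * h" if h: "0 < h" for h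
  proof -
    have "(\<Sum>k. indicator (Ak h k) \<omega> * \<psi> (X (real (Suc k) * h) \<omega>)) = (\<Sum>k<Nh h \<omega>. indicator (Ak h k) \<omega> * \<psi> (X (real (Suc k) * h) \<omega>))"
      by (rule suminf_finite) (use Ak_iff[OF h \<omega>] in \<open>auto simp: indicator_def\<close>)
    also have "\<dots> = (\<Sum>k<Nh h \<omega>. f (real (Suc k) * h))"
      using Ak_iff[OF h \<omega>] by (intro sum.cong) (auto simp: indicator_def f_def)
    finally show ?thesis by (simp add: J_def)
  qed
  have Jint: "J h \<psi> \<omega> = integral\<^sup>L lborel (G h)" if h: "0 < h" for h
  proof -
    have "integral\<^sup>L lborel (G h) = (\<Sum>k<Nh h \<omega>. integral\<^sup>L lborel (\<lambda>s. indicator {real k * h..<real (Suc k) * h} s * f (real (Suc k) * h)))"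
      unfolding G_def
      by (rule Bochner_Integration.integral_sum)
         (use h in \<open>auto intro!: integrable_mult_left integrable_real_indicator simp: emeasure_lborel_Ico\<close>)
    also have "\<dots> = (\<Sum>k<Nh h \<omega>. h * f (real (Suc k) * h))"
    proof (rule sum.cong[OF refl])
      fix k
      have "measure lborel {real k * h..<real (Suc k) * h} = h" using h by (simp add: measure_lborel_Ico algebra_simps)
      then show "integral\<^sup>L lborel (\<lambda>s. indicator {real k * h..<real (Suc k) * h} s * f (real (Suc k) * h)) = h * f (real (Suc k) * h)"
        by simp
    qed
    finally show ?thesis using Jsum[OF h] by (simp add: sum_distrib_left mult.commute)
  qed
  have Gform: "G h s = (if nat \<lfloor>s/h\<rfloor> < Nh h \<omega> then f (real (Suc (nat \<lfloor>s/h\<rfloor>)) * h) else 0)"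
    if h: "0 < h" and s: "0 \<le> s" for h s
  proof -
    have "G h s = (\<Sum>k<Nh h \<omega>. if k = nat \<lfloor>s/h\<rfloor> then f (real (Suc k) * h) else 0)"
      unfolding G_def
    proof (intro sum.cong refl)
      fix k
      show "indicator {real k * h..<real (Suc k) * h} s * f (real (Suc k) * h) = (if k = nat \<lfloor>s/h\<rfloor> then f (real (Suc k) * h) else 0)"
        unfolding indicator_def using floor_cell(3)[OF h s, of k] by (simp del: of_nat_Suc)
    qed
    then show ?thesis by (simp add: sum.delta)
  qed
  have Gneg: "G h s = 0" if h: "0 < h" and s: "s < 0" for h s
  proof -
    have "s \<notin> {real k * h..<real (Suc k) * h}" for k using h s by (simp add: not_le) (smt (verit) mult_nonneg_nonneg of_nat_0_le_iff)
    then show ?thesis unfolding G_def by simp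
  qed
  have Gbnd: "\<bar>G h s\<bar> \<le> cb \<psi> * indicator {0..T+1} s" if h: "0 < h" "h \<le> 1" for h s
  proof (cases "s < 0")
    case True then show ?thesis using Gneg[OF h(1) True] by (simp add: cb_nonneg)
  next
    case False
    then have s: "0 \<le> s" by simp
    show ?thesis
    proof (cases "nat \<lfloor>s/h\<rfloor> < Nh h \<omega>")
      case True
      have "s < real (Suc (nat \<lfloor>s/h\<rfloor>)) * h" by (rule floor_cell(2)[OF h(1) s])
      also have "\<dots> \<le> real (Nh h \<omega>) * h" using True h by (intro mult_right_mono) auto
      also have "\<dots> < T + h" using Nh_le[OF h(1) \<omega>] by (simp add: T_def)
      finally have "s \<le> T + 1" using h by simp
      then show ?thesis using Gform[OF h(1) s] True s by (simp add: f_def cb_bound)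
    next
      case False then show ?thesis using Gform[OF h(1) s] by (simp add: cb_nonneg)
    qed
  qed
  have approx_ev: "eventually (\<lambda>m. f (real (Suc (nat \<lfloor>s / hh m\<rfloor>)) * hh m) = f s) sequentially" if s: "0 \<le> s" for s
  proof -
    obtain e where e: "e > 0" "\<And>r. s \<le> r \<Longrightarrow> r < s + e \<Longrightarrow> f r = f s" using rcf[OF s] by blast
    show ?thesis using hh_ev[OF e(1)]
    proof eventually_elim
      case (elim m)
      have "real (nat \<lfloor>s / hh m\<rfloor>) * hh m \<le> s" by (rule floor_cell(1)[OF hh_pos s])
      moreover have "real (Suc (nat \<lfloor>s / hh m\<rfloor>)) * hh m = real (nat \<lfloor>s / hh m\<rfloor>) * hh m + hh m"
        by (simp add: algebra_simps)
      ultimately have "real (Suc (nat \<lfloor>s / hh m\<rfloor>)) * hh m < s + e" using elim by linarith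
      then show ?case by (intro e(2)) (use floor_cell(2)[OF hh_pos s, of m] in auto)
    qed
  qed
  have Glim: "(\<lambda>m. G (hh m) s) \<longlonglongrightarrow> F s" if sT: "s \<noteq> T" for s
  proof (cases "s < 0")
    case True then show ?thesis using Gneg[OF hh_pos True] by (simp add: F_def)
  next
    case False
    then have s: "0 \<le> s" by simp
    show ?thesis
    proof (cases "s < T")
      case True
      have "eventually (\<lambda>m. G (hh m) s = F s) sequentially" using approx_ev[OF s]
      proof eventually_elim
        case (elim m)
        have "real (nat \<lfloor>s / hh m\<rfloor>) * hh m < T" using floor_cell(1)[OF hh_pos s, of m] True by simp
        then have "nat \<lfloor>s / hh m\<rfloor> < Nh (hh m) \<omega>" using kN[OF hh_pos] by simp
        then show ?case using Gform[OF hh_pos s] elim True s by (simp add: F_def)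
      qed
      then show ?thesis by (rule tendsto_eventually)
    next
      case False
      then have sT': "T < s" using sT by simp
      have ev: "eventually (\<lambda>m. hh m < s - T) sequentially" using sT' by (intro hh_ev) simp
      have "eventually (\<lambda>m. G (hh m) s = F s) sequentially" using ev
      proof (eventually_elim)
        case (elim m)
        have "s < real (Suc (nat \<lfloor>s / hh m\<rfloor>)) * hh m" by (rule floor_cell(2)[OF hh_pos s])
        then have "T \<le> real (nat \<lfloor>s / hh m\<rfloor>) * hh m" using elim by (simp add: algebra_simps)
        then have "\<not> nat \<lfloor>s / hh m\<rfloor> < Nh (hh m) \<omega>" using kN[OF hh_pos] by simp
        then show ?case using Gform[OF hh_pos s] sT' by (simp add: F_def)
      qed
      then show ?thesis by (rule tendsto_eventually)
    qed
  qed
  have Gmeas: "G h \<in> borel_measurable lborel" for h unfolding G_def by measurable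
  have Fmeas: "F \<in> borel_measurable lborel"
  proof (rule borel_measurable_LIMSEQ_real)
    let ?u = "\<lambda>m s. indicator {0..<T} s * f (real (Suc (nat \<lfloor>s / hh m\<rfloor>)) * hh m)"
    show "?u m \<in> borel_measurable lborel" for m
    proof -
      have "(\<lambda>s. f (real (Suc (nat \<lfloor>s / hh m\<rfloor>)) * hh m)) \<in> borel_measurable lborel"
        by (rule measurable_compose_countable'[where f="\<lambda>n s. f (real (Suc n) * hh m)" and g="\<lambda>s. nat \<lfloor>s / hh m\<rfloor>" and I=UNIV])
           (auto simp del: of_nat_Suc)
      then show ?thesis by measurable
    qed
    show "(\<lambda>m. ?u m s) \<longlonglongrightarrow> F s" if "s \<in> space lborel" for s
    proof (cases "0 \<le> s \<and> s < T")
      case True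
      have "eventually (\<lambda>m. ?u m s = F s) sequentially" using approx_ev[of s] True
        by (auto simp: F_def elim!: eventually_mono)
      then show ?thesis by (rule tendsto_eventually)
    next
      case False then show ?thesis by (simp add: F_def)
    qed
  qed
  have wint: "integrable lborel (\<lambda>s. cb \<psi> * indicator {0..T+1} s :: real)"
    by (intro integrable_mult_right integrable_real_indicator) (auto simp: T0)
  have dc: "(\<lambda>m. integral\<^sup>L lborel (G (hh m))) \<longlonglongrightarrow> integral\<^sup>L lborel F"
  proof (rule integral_dominated_convergence[OF Fmeas Gmeas wint])
    show "AE s in lborel. (\<lambda>m. G (hh m) s) \<longlonglongrightarrow> F s"
      using AE_lborel_singleton[of T] by eventually_elim (rule Glim)
    show "AE s in lborel. norm (G (hh m) s) \<le> cb \<psi> * indicator {0..T+1} s" for m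
      using Gbnd[OF hh_pos hh_le1] by auto
  qed
  have FI: "integral\<^sup>L lborel F = I \<psi> \<omega>"
  proof -
    have "I \<psi> \<omega> = (\<integral>s. indicator {0..T} s * f s \<partial>lborel)"
      by (simp add: I_def set_lebesgue_integral_def f_def T_def)
    also have "\<dots> = integral\<^sup>L lborel F"
    proof (rule integral_cong_AE)
      have "(\<lambda>s. indicator {0..T} s * f s) = (\<lambda>s. indicator {T} s * f s + F s)"
        using T0 by (auto simp: F_def indicator_def fun_eq_iff)
      moreover have "(\<lambda>s. indicator {T} s * f s) \<in> borel_measurable lborel"
      proof -
        have "(\<lambda>s. indicator {T} s * f s) = (\<lambda>s. indicator {T} s * f T)" by (auto simp: indicator_def fun_eq_iff)
        then show ?thesis by simp
      qed
      ultimately show "(\<lambda>s. indicator {0..T} s * f s) \<in> borel_measurable lborel" using Fmeas by simp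
      show "F \<in> borel_measurable lborel" by (rule Fmeas)
      show "AE s in lborel. indicator {0..T} s * f s = F s"
        using AE_lborel_singleton[of T] by eventually_elim (auto simp: F_def indicator_def)
    qed
    finally show ?thesis by simp
  qed
  show "(\<lambda>m. J (hh m) \<psi> \<omega>) \<longlonglongrightarrow> I \<psi> \<omega>"
    using dc unfolding FI by (simp add: Jint[OF hh_pos])
  show "\<bar>J (hh m) \<psi> \<omega>\<bar> \<le> cb \<psi> * (\<tau> \<omega> + 1)" for m
  proof -
    have "\<bar>J (hh m) \<psi> \<omega>\<bar> \<le> (\<Sum>k<Nh (hh m) \<omega>. \<bar>f (real (Suc k) * hh m)\<bar>) * hh m"
      unfolding Jsum[OF hh_pos] using hh_pos[of m] by (simp add: abs_mult sum_abs)
    also have "\<dots> \<le> (\<Sum>k<Nh (hh m) \<omega>. cb \<psi>) * hh m"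
      using hh_pos[of m] by (intro mult_right_mono sum_mono) (auto simp: f_def cb_bound)
    also have "\<dots> = cb \<psi> * (real (Nh (hh m) \<omega>) * hh m)" by simp
    also have "\<dots> \<le> cb \<psi> * (\<tau> \<omega> + 1)"
      using Nh_le[OF hh_pos \<omega>, of m] hh_le1[of m] by (intro mult_left_mono) (auto simp: cb_nonneg)
    finally show ?thesis .
  qed
qed


lemma R_lim:
  assumes \<omega>: "\<omega> \<in> space M"
  shows "(\<lambda>m. R (hh m) \<phi> \<omega>) \<longlonglongrightarrow> \<phi> (X (\<tau> \<omega>) \<omega>)"
proof -
  obtain e where e: "e > 0" "\<And>s. \<tau> \<omega> \<le> s \<and> s < \<tau> \<omega> + e \<longrightarrow> X s \<omega> = X (\<tau> \<omega>) \<omega>"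
    using rc[OF \<omega> \<tau>nn[OF \<omega>]] by blast
  have "eventually (\<lambda>m. R (hh m) \<phi> \<omega> = \<phi> (X (\<tau> \<omega>) \<omega>)) sequentially" using hh_ev[OF e(1)]
  proof eventually_elim
    case (elim m)
    have "\<tau> \<omega> \<le> real (Nh (hh m) \<omega>) * hh m" by (rule Nh_ge[OF hh_pos \<omega>])
    moreover have "real (Nh (hh m) \<omega>) * hh m < \<tau> \<omega> + e" using Nh_le[OF hh_pos \<omega>, of m] elim by linarith
    ultimately have "X (real (Nh (hh m) \<omega>) * hh m) \<omega> = X (\<tau> \<omega>) \<omega>" using e(2) by blast
    then show ?case by (simp add: R_def)
  qed
  then show ?thesis by (rule tendsto_eventually)
qed

lemma Xtau_meas: "(\<lambda>\<omega>. \<phi> (X (\<tau> \<omega>) \<omega>) :: real) \<in> borel_measurable M"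
  by (rule borel_measurable_LIMSEQ_real[OF R_lim R_meas]) (auto intro: less_imp_le hh_pos)

lemma J_meas: "0 < h \<Longrightarrow> J h \<psi> \<in> borel_measurable M"
proof -
  assume h: "0 < h"
  have "integrable M (\<lambda>\<omega>. \<Sum>k. indicator (Ak h k) \<omega> * \<psi> (X (real (Suc k) * h) \<omega>))"
    by (rule suminf_exch(1)[OF h, where B="cb \<psi>"]) (auto intro: Xf_meas cb_bound simp: h less_imp_le)
  then have "(\<lambda>\<omega>. \<Sum>k. indicator (Ak h k) \<omega> * \<psi> (X (real (Suc k) * h) \<omega>)) \<in> borel_measurable M"
    by (rule borel_measurable_integrable)
  then show ?thesis unfolding J_def by simp
qed

lemma I_props:
  shows "I \<psi> \<in> borel_measurable M" "integrable M (I \<psi>)"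
    "(\<lambda>m. expectation (J (hh m) \<psi>)) \<longlonglongrightarrow> expectation (I \<psi>)"
proof -
  show meas: "I \<psi> \<in> borel_measurable M"
    by (rule borel_measurable_LIMSEQ_real[OF J_lim(1) J_meas[OF hh_pos]])
  have w: "integrable M (\<lambda>\<omega>. cb \<psi> * (\<tau> \<omega> + 1))" using \<tau>int by simp
  have lim: "AE \<omega> in M. (\<lambda>m. J (hh m) \<psi> \<omega>) \<longlonglongrightarrow> I \<psi> \<omega>" by (intro AE_I2 J_lim(1))
  have bnd: "AE \<omega> in M. norm (J (hh m) \<psi> \<omega>) \<le> cb \<psi> * (\<tau> \<omega> + 1)" for m
    by (intro AE_I2) (simp add: J_lim(2))
  show "integrable M (I \<psi>)"
    by (rule integrable_dominated_convergence[OF meas J_meas[OF hh_pos] w lim bnd])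
  show "(\<lambda>m. expectation (J (hh m) \<psi>)) \<longlonglongrightarrow> expectation (I \<psi>)"
    by (rule integral_dominated_convergence[OF meas J_meas[OF hh_pos] w lim bnd])
qed

lemma dynkin:
  "expectation (\<lambda>\<omega>. \<phi> (X (\<tau> \<omega>) \<omega>)) - expectation (\<lambda>\<omega>. \<phi> (X 0 \<omega>)) = expectation (I (Gf Q \<phi>))"
proof -
  define C where "C = exp (Kb Q) * cb \<phi> + (Kb Q + exp (Kb Q)) * cb (Gf Q \<phi>)"
  define a where "a m = expectation (R (hh m) \<phi>) - expectation (\<lambda>\<omega>. \<phi> (X 0 \<omega>)) - expectation (J (hh m) (Gf Q \<phi>))" for m
  have Rl: "(\<lambda>m. expectation (R (hh m) \<phi>)) \<longlonglongrightarrow> expectation (\<lambda>\<omega>. \<phi> (X (\<tau> \<omega>) \<omega>))"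
  proof (rule integral_dominated_convergence[where w="\<lambda>_. cb \<phi>"])
    show "(\<lambda>\<omega>. \<phi> (X (\<tau> \<omega>) \<omega>)) \<in> borel_measurable M" by (rule Xtau_meas)
    show "R (hh m) \<phi> \<in> borel_measurable M" for m by (rule R_meas) (auto intro: less_imp_le hh_pos)
    show "integrable M (\<lambda>_. cb \<phi>)" by simp
    show "AE \<omega> in M. (\<lambda>m. R (hh m) \<phi> \<omega>) \<longlonglongrightarrow> \<phi> (X (\<tau> \<omega>) \<omega>)" by (intro AE_I2 R_lim)
    show "AE \<omega> in M. norm (R (hh m) \<phi> \<omega>) \<le> cb \<phi>" for m by (intro AE_I2) (simp add: R_def cb_bound)
  qed
  have a1: "a \<longlonglongrightarrow> expectation (\<lambda>\<omega>. \<phi> (X (\<tau> \<omega>) \<omega>)) - expectation (\<lambda>\<omega>. \<phi> (X 0 \<omega>)) - expectation (I (Gf Q \<phi>))"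
    unfolding a_def by (intro tendsto_diff Rl tendsto_const I_props(3))
  have a0: "a \<longlonglongrightarrow> 0"
  proof (rule Lim_null_comparison)
    show "eventually (\<lambda>m. norm (a m) \<le> C * (expectation \<tau> + 1) * hh m) sequentially"
    proof (intro always_eventually allI)
      fix m
      have "\<bar>a m\<bar> \<le> C * hh m * (expectation \<tau> + 1)"
        unfolding a_def C_def by (rule dynkin_discrete[OF hh_pos hh_le1])
      then show "norm (a m) \<le> C * (expectation \<tau> + 1) * hh m" by (simp only: real_norm_def mult.assoc mult.commute[of "hh m"])
    qed
    show "(\<lambda>m. C * (expectation \<tau> + 1) * hh m) \<longlonglongrightarrow> 0"
      using tendsto_mult[OF tendsto_const hh_lim, of "C * (expectation \<tau> + 1)"] by simp
  qed
  from LIMSEQ_unique[OF a1 a0] show ?thesis by simp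
qed


lemma J_form: "0 < h \<Longrightarrow> \<omega> \<in> space M \<Longrightarrow> J h \<psi> \<omega> = (\<Sum>k<Nh h \<omega>. \<psi> (X (real (Suc k) * h) \<omega>)) * h"
proof -
  assume h: "0 < h" and \<omega>: "\<omega> \<in> space M"
  have "(\<Sum>k. indicator (Ak h k) \<omega> * \<psi> (X (real (Suc k) * h) \<omega>)) = (\<Sum>k<Nh h \<omega>. indicator (Ak h k) \<omega> * \<psi> (X (real (Suc k) * h) \<omega>))"
    by (rule suminf_finite) (use Ak_iff[OF h \<omega>] in \<open>auto simp: indicator_def\<close>)
  also have "\<dots> = (\<Sum>k<Nh h \<omega>. \<psi> (X (real (Suc k) * h) \<omega>))"
    using Ak_iff[OF h \<omega>] by (intro sum.cong) (auto simp: indicator_def)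
  finally show ?thesis by (simp add: J_def)
qed

lemma I_lin:
  assumes \<omega>: "\<omega> \<in> space M"
  shows "I (\<lambda>p. \<Sum>w\<in>W. c w * \<psi> w p) \<omega> = (\<Sum>w\<in>W. c w * I (\<psi> w) \<omega>)"
proof -
  have eq: "J (hh m) (\<lambda>p. \<Sum>w\<in>W. c w * \<psi> w p) \<omega> = (\<Sum>w\<in>W. c w * J (hh m) (\<psi> w) \<omega>)" for m
  proof -
    have "J (hh m) (\<lambda>p. \<Sum>w\<in>W. c w * \<psi> w p) \<omega> = (\<Sum>k<Nh (hh m) \<omega>. \<Sum>w\<in>W. c w * \<psi> w (X (real (Suc k) * hh m) \<omega>)) * hh m"
      by (rule J_form[OF hh_pos \<omega>])
    also have "\<dots> = (\<Sum>w\<in>W. \<Sum>k<Nh (hh m) \<omega>. c w * \<psi> w (X (real (Suc k) * hh m) \<omega>)) * hh m"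
      by (subst sum.swap) (rule refl)
    also have "\<dots> = (\<Sum>w\<in>W. c w * ((\<Sum>k<Nh (hh m) \<omega>. \<psi> w (X (real (Suc k) * hh m) \<omega>)) * hh m))"
      by (simp add: sum_distrib_left sum_distrib_right mult.assoc)
    also have "\<dots> = (\<Sum>w\<in>W. c w * J (hh m) (\<psi> w) \<omega>)"
      by (simp add: J_form[OF hh_pos \<omega>])
    finally show ?thesis .
  qed
  have l1: "(\<lambda>m. J (hh m) (\<lambda>p. \<Sum>w\<in>W. c w * \<psi> w p) \<omega>) \<longlonglongrightarrow> I (\<lambda>p. \<Sum>w\<in>W. c w * \<psi> w p) \<omega>"
    by (rule J_lim(1)[OF \<omega>])
  have l2: "(\<lambda>m. J (hh m) (\<lambda>p. \<Sum>w\<in>W. c w * \<psi> w p) \<omega>) \<longlonglongrightarrow> (\<Sum>w\<in>W. c w * I (\<psi> w) \<omega>)"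
    unfolding eq by (intro tendsto_sum tendsto_mult tendsto_const J_lim(1)[OF \<omega>])
  show ?thesis using LIMSEQ_unique[OF l1 l2] .
qed

lemma I_one: "\<omega> \<in> space M \<Longrightarrow> I (\<lambda>_. 1) \<omega> = \<tau> \<omega>"
  using \<tau>nn[of \<omega>] by (simp add: I_def set_lebesgue_integral_def)

end

theorem lemma4p2:
  fixes M :: "'a measure"
    and QU :: "'u::finite \<Rightarrow> 'u \<Rightarrow> real" and QV :: "'v::finite \<Rightarrow> 'v \<Rightarrow> real"
    and X :: "real \<Rightarrow> 'a \<Rightarrow> 'u \<times> 'v"
    and \<pi>V :: "'v \<Rightarrow> real" and \<tau> :: "'a \<Rightarrow> real"
  assumes "prob_space M"
    and "irreducible_gen QU" and "irreducible_gen QV"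
    and "stationary_dist QV \<pi>V"
    and "ctmc M (prod_gen QU QV) X"
    and "stopping_time (nat_filtration M X) \<tau>"
    and "\<forall>\<omega>\<in>space M. 0 \<le> \<tau> \<omega>"
    and "AE \<omega> in M. 0 < \<tau> \<omega>"
    and "integrable M \<tau>"
    and "distr M (count_space UNIV) (\<lambda>\<omega>. snd (X 0 \<omega>)) =
         distr M (count_space UNIV) (\<lambda>\<omega>. snd (X (\<tau> \<omega>) \<omega>))"
  shows "\<forall>v. (\<integral>\<omega>. (\<integral>t\<in>{0..\<tau> \<omega>}. (if snd (X t \<omega>) = v then 1 else 0) \<partial>lborel) \<partial>M)
           = (\<integral>\<omega>. \<tau> \<omega> \<partial>M) * \<pi>V v"
proof -
  have "stopped M (prod_gen QU QV) X \<tau>"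
    unfolding stopped_def stopped_axioms_def ctmc_setup_def using assms(1,5,6,7,9) by blast
  then interpret S: stopped M "prod_gen QU QV" X \<tau> .

  have genU: "generator QU" using assms(2) by (simp add: irreducible_gen_def)
  define ind where "ind w = (\<lambda>p::'u \<times> 'v. if snd p = w then 1 else (0::real))" for w
  define \<nu> where "\<nu> w = (\<integral>\<omega>. S.I (ind w) \<omega> \<partial>M)" for w
  define E\<tau> where "E\<tau> = (\<integral>\<omega>. \<tau> \<omega> \<partial>M)"
  have lhs: "(\<integral>\<omega>. (\<integral>t\<in>{0..\<tau> \<omega>}. (if snd (X t \<omega>) = v then 1 else 0) \<partial>lborel) \<partial>M) = \<nu> v" for v
    by (simp add: \<nu>_def S.I_def ind_def)
  have Iint: "integrable M (S.I \<psi>)" for \<psi> by (rule S.I_props(2))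
  have meas_snd0: "(\<lambda>\<omega>. snd (X 0 \<omega>)) \<in> measurable M (count_space UNIV)"
    by (rule measurable_compose[OF S.Xmeas]) (auto simp: measurable_count_space_eq1)
  have meas_sndt: "(\<lambda>\<omega>. snd (X (\<tau> \<omega>) \<omega>)) \<in> measurable M (count_space UNIV)"
  proof (subst measurable_count_space_eq2_countable, safe)
    fix a :: 'v
    have "(\<lambda>\<omega>. ind a (X (\<tau> \<omega>) \<omega>)) \<in> borel_measurable M" by (rule S.Xtau_meas)
    then have "(\<lambda>\<omega>. ind a (X (\<tau> \<omega>) \<omega>)) -` {1} \<inter> space M \<in> sets M" by (rule measurable_sets) auto
    moreover have "(\<lambda>\<omega>. ind a (X (\<tau> \<omega>) \<omega>)) -` {1} \<inter> space M = (\<lambda>\<omega>. snd (X (\<tau> \<omega>) \<omega>)) -` {a} \<inter> space M"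
      by (auto simp: ind_def split: if_splits)
    ultimately show "(\<lambda>\<omega>. snd (X (\<tau> \<omega>) \<omega>)) -` {a} \<inter> space M \<in> sets M" by simp
  qed auto
  have stat: "(\<Sum>w\<in>UNIV. \<nu> w * QV w y) = 0" for y
  proof -
    define f where "f w = (if w = y then 1 else (0::real))" for w
    define \<phi> where "\<phi> p = f (snd p)" for p :: "'u \<times> 'v"
    have G: "Gf (prod_gen QU QV) \<phi> = (\<lambda>p. \<Sum>w\<in>UNIV. QV w y * ind w p)"
    proof
      fix p :: "'u \<times> 'v"
      have "Gf (prod_gen QU QV) \<phi> p = Gf QV f (snd p)"
        unfolding \<phi>_def by (rule prod_gen_snd[OF genU])
      also have "\<dots> = QV (snd p) y"
      proof -
        have "\<And>z. QV (snd p) z * f z = (if z = y then QV (snd p) y else 0)" by (simp add: f_def)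
        then show ?thesis by (simp add: Gf_def sum.delta')
      qed
      also have "\<dots> = (\<Sum>w\<in>UNIV. QV w y * ind w p)"
      proof -
        have "\<And>w. QV w y * ind w p = (if w = snd p then QV (snd p) y else 0)" by (auto simp: ind_def)
        then show ?thesis by (simp add: sum.delta')
      qed
      finally show "Gf (prod_gen QU QV) \<phi> p = (\<Sum>w\<in>UNIV. QV w y * ind w p)" .
    qed
    have eqexp: "(\<integral>\<omega>. \<phi> (X (\<tau> \<omega>) \<omega>) \<partial>M) = (\<integral>\<omega>. \<phi> (X 0 \<omega>) \<partial>M)"
    proof -
      have "(\<integral>\<omega>. \<phi> (X (\<tau> \<omega>) \<omega>) \<partial>M) = integral\<^sup>L (distr M (count_space UNIV) (\<lambda>\<omega>. snd (X (\<tau> \<omega>) \<omega>))) f"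
        by (subst integral_distr[OF meas_sndt]) (auto simp: \<phi>_def)
      also have "\<dots> = integral\<^sup>L (distr M (count_space UNIV) (\<lambda>\<omega>. snd (X 0 \<omega>))) f"
        using assms(10) by simp
      also have "\<dots> = (\<integral>\<omega>. \<phi> (X 0 \<omega>) \<partial>M)"
        by (subst integral_distr[OF meas_snd0]) (auto simp: \<phi>_def)
      finally show ?thesis .
    qed
    have "0 = (\<integral>\<omega>. S.I (Gf (prod_gen QU QV) \<phi>) \<omega> \<partial>M)"
      using S.dynkin[of \<phi>] eqexp by simp
    also have "\<dots> = (\<integral>\<omega>. (\<Sum>w\<in>UNIV. QV w y * S.I (ind w) \<omega>) \<partial>M)"
      unfolding G by (rule Bochner_Integration.integral_cong[OF refl S.I_lin])
    also have "\<dots> = (\<Sum>w\<in>UNIV. QV w y * \<nu> w)"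
      unfolding \<nu>_def by (subst Bochner_Integration.integral_sum) (auto intro: Iint)
    finally show ?thesis by (simp add: mult.commute)
  qed
  have total: "(\<Sum>w\<in>UNIV. \<nu> w) = E\<tau>"
  proof -
    have "(\<Sum>w\<in>UNIV. \<nu> w) = (\<integral>\<omega>. (\<Sum>w\<in>UNIV. S.I (ind w) \<omega>) \<partial>M)"
      unfolding \<nu>_def by (subst Bochner_Integration.integral_sum) (auto intro: Iint)
    also have "\<dots> = (\<integral>\<omega>. \<tau> \<omega> \<partial>M)"
    proof (rule Bochner_Integration.integral_cong[OF refl])
      fix \<omega> assume \<omega>: "\<omega> \<in> space M"
      have "(\<lambda>p::'u \<times> 'v. \<Sum>w\<in>UNIV. 1 * ind w p) = (\<lambda>_. 1)"
      proof
        fix p :: "'u \<times> 'v"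
        have "\<And>w. 1 * ind w p = (if w = snd p then 1 else 0)" by (auto simp: ind_def)
        then show "(\<Sum>w\<in>UNIV. 1 * ind w p) = 1" by (simp add: sum.delta')
      qed
      then have "S.I (\<lambda>_. 1) \<omega> = (\<Sum>w\<in>UNIV. 1 * S.I (ind w) \<omega>)"
        using S.I_lin[OF \<omega>, where W=UNIV and c="\<lambda>_. 1" and \<psi>=ind] by simp
      then show "(\<Sum>w\<in>UNIV. S.I (ind w) \<omega>) = \<tau> \<omega>" using S.I_one[OF \<omega>] by simp
    qed
    finally show ?thesis by (simp add: E\<tau>_def)
  qed
  have \<pi>: "(\<forall>x. 0 \<le> \<pi>V x)" "(\<Sum>x\<in>UNIV. \<pi>V x) = 1" "\<And>y. (\<Sum>x\<in>UNIV. \<pi>V x * QV x y) = 0"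
    using assms(4) by (auto simp: stationary_dist_def)
  show ?thesis
  proof
    fix v
    define \<mu> where "\<mu> w = \<nu> w - E\<tau> * \<pi>V w" for w
    have "(\<Sum>x\<in>UNIV. \<mu> x * QV x y) = 0" for y
    proof -
      have "(\<Sum>x\<in>UNIV. \<mu> x * QV x y) = (\<Sum>x\<in>UNIV. \<nu> x * QV x y) - E\<tau> * (\<Sum>x\<in>UNIV. \<pi>V x * QV x y)"
        by (simp add: \<mu>_def algebra_simps sum_subtractf sum_distrib_left)
      then show ?thesis using stat[of y] \<pi>(3)[of y] by simp
    qed
    moreover have "(\<Sum>x\<in>UNIV. \<mu> x) = 0"
      using total \<pi>(2) by (simp add: \<mu>_def sum_subtractf sum_distrib_left[symmetric])
    ultimately have "\<mu> v = 0" by (rule stationary_unique[OF assms(3)])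
    then show "(\<integral>\<omega>. (\<integral>t\<in>{0..\<tau> \<omega>}. (if snd (X t \<omega>) = v then 1 else 0) \<partial>lborel) \<partial>M) = (\<integral>\<omega>. \<tau> \<omega> \<partial>M) * \<pi>V v"
      unfolding lhs by (simp add: \<mu>_def E\<tau>_def)
  qed
qed

end
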